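(* Let $\mathfrak{F}$ be any saturated formation of finite groups such that every group in $\mathfrak{F}$ is soluble and $\mathfrak{U}\subseteq\mathfrak{F}$, where $\mathfrak{U}$ is the class of all finite supersoluble groups. Then there exist a finite group $G$ and a normal subgroup $H$ of $G$ such that $G/H\in\mathfrak{F}$ and, for every maximal subgroup $M$ of $G$, the index $|\tilde{\mathrm{F}}(H):\tilde{\mathrm{F}}(H)\cap M|$ is equal to $1$ or to a prime, but $G\notin\mathfrak{F}$. In particular, this holds for $\mathfrak{F}=\mathfrak{U}$.
   Context: All groups are finite. A formation is a class of groups closed under homomorphic images and such that if $G/N_1$ and $G/N_2$ lie in it then so does $G/(N_1\cap N_2)$; it is saturated if $G/\Phi(G)\in\mathfrak{F}$ implies $G\in\mathfrak{F}$, where $\Phi(G)$ is the Frattini subgroup. For a group $X$, $\tilde{\mathrm{F}}(X)$ denotes the subgroup of $X$ containing $\Phi(X)$ defined by $\tilde{\mathrm{F}}(X)/\Phi(X)=\mathrm{Soc}(X/\Phi(X))$, the socle (product of all minimal normal subgroups) of $X/\Phi(X)$. *)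

theory Defs
  imports "HOL-Algebra.Algebra"
begin

definition maxsub :: "('a, 'b) monoid_scheme \<Rightarrow> 'a set \<Rightarrow> bool" where
  "maxsub G M \<equiv> subgroup M G \<and> M \<noteq> carrier G \<and>
     (\<forall>K. subgroup K G \<longrightarrow> M \<subseteq> K \<longrightarrow> K = M \<or> K = carrier G)"

definition frattini :: "('a, 'b) monoid_scheme \<Rightarrow> 'a set" where
  "frattini G \<equiv> carrier G \<inter> \<Inter>{M. maxsub G M}"

definition min_normal :: "('a, 'b) monoid_scheme \<Rightarrow> 'a set \<Rightarrow> bool" where
  "min_normal G N \<equiv> N \<lhd> G \<and> N \<noteq> {\<one>\<^bsub>G\<^esub>} \<and>
     (\<forall>K. K \<lhd> G \<longrightarrow> K \<subseteq> N \<longrightarrow> K = {\<one>\<^bsub>G\<^esub>} \<or> K = N)"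

definition socle :: "('a, 'b) monoid_scheme \<Rightarrow> 'a set" where
  "socle G \<equiv> generate G (\<Union>{N. min_normal G N})"

text \<open>\<open>tildeF X\<close>: the subgroup containing Phi(X) with
  tildeF(X)/Phi(X) = Soc(X/Phi(X)), i.e. the full preimage.\<close>
definition tildeF :: "('a, 'b) monoid_scheme \<Rightarrow> 'a set" where
  "tildeF Y \<equiv> {x \<in> carrier Y. r_coset Y (frattini Y) x \<in> socle (Y Mod frattini Y)}"

definition supersoluble :: "('a, 'b) monoid_scheme \<Rightarrow> bool" where
  "supersoluble G \<equiv> \<exists>(n::nat) (S :: nat \<Rightarrow> 'a set).
     S 0 = {\<one>\<^bsub>G\<^esub>} \<and> S n = carrier G \<and> (\<forall>i\<le>n. S i \<lhd> G) \<and>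
     (\<forall>i<n. S i \<subseteq> S (Suc i) \<and>
        cyclic_group ((G\<lparr>carrier := S (Suc i)\<rparr>) Mod (S i)))"

text \<open>Classes of finite groups are represented by predicates on groups with
  carrier in nat (every finite group is isomorphic to such a group); a group of
  arbitrary type belongs to the class if it is isomorphic to a member.\<close>
type_synonym grp = "nat monoid"

definition in_cls :: "(grp \<Rightarrow> bool) \<Rightarrow> ('a, 'b) monoid_scheme \<Rightarrow> bool" where
  "in_cls F G \<equiv> \<exists>K. F K \<and> G \<cong> K"

definition group_class :: "(grp \<Rightarrow> bool) \<Rightarrow> bool" where
  "group_class F \<equiv> (\<forall>K. F K \<longrightarrow> group K \<and> finite (carrier K))"

definition formation :: "(grp \<Rightarrow> bool) \<Rightarrow> bool" where
  "formation F \<equiv> group_class F \<and>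
     (\<forall>G K h. F G \<longrightarrow> group K \<longrightarrow> h \<in> hom G K \<longrightarrow> h ` carrier G = carrier K \<longrightarrow> F K) \<and>
     (\<forall>(G::grp) N1 N2. group G \<longrightarrow> finite (carrier G) \<longrightarrow> N1 \<lhd> G \<longrightarrow> N2 \<lhd> G \<longrightarrow>
        in_cls F (G Mod N1) \<longrightarrow> in_cls F (G Mod N2) \<longrightarrow> in_cls F (G Mod (N1 \<inter> N2)))"

definition saturated :: "(grp \<Rightarrow> bool) \<Rightarrow> bool" where
  "saturated F \<equiv> \<forall>G::grp. group G \<longrightarrow> finite (carrier G) \<longrightarrow>
     in_cls F (G Mod frattini G) \<longrightarrow> F G"

definition U_cls :: "grp \<Rightarrow> bool" where
  "U_cls K \<equiv> group K \<and> finite (carrier K) \<and> supersoluble K"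

definition counterexample_exists :: "(grp \<Rightarrow> bool) \<Rightarrow> bool" where
  "counterexample_exists F \<equiv> \<exists>(G::grp) H. group G \<and> finite (carrier G) \<and> H \<lhd> G \<and>
     in_cls F (G Mod H) \<and>
     (\<forall>M. maxsub G M \<longrightarrow>
        (let T = tildeF (G\<lparr>carrier := H\<rparr>) in
          card T div card (T \<inter> M) = 1 \<or> Factorial_Ring.prime (card T div card (T \<inter> M)))) \<and>
     \<not> in_cls F G"

end

theory Submission
  imports Defs
begin

definition U6 :: "nat set" where "U6 = {1..6}"
definition nrm :: "nat set \<Rightarrow> nat set" where "nrm Z0 = (if 6 \<in> Z0 then U6 - Z0 else Z0)"
definition act :: "(nat \<Rightarrow> nat) \<Rightarrow> nat set \<Rightarrow> nat set" where "act \<sigma> S = nrm (\<sigma> ` S)"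
definition sd :: "nat set \<Rightarrow> nat set \<Rightarrow> nat set" where "sd S T = (S - T) \<union> (T - S)"

lemma U6_5: "{1..5::nat} \<subseteq> U6" by (auto simp: U6_def)

lemma six_le: "(x::nat) \<in> {1..6} \<Longrightarrow> x \<noteq> 6 \<Longrightarrow> x \<in> {1..5}" by auto

lemma nrm_sub: "Z0 \<subseteq> U6 \<Longrightarrow> nrm Z0 \<subseteq> {1..5}"
proof (rule subsetI)
  fix x assume a: "Z0 \<subseteq> U6" "x \<in> nrm Z0"
  then have "x \<in> U6" "x \<noteq> 6" unfolding nrm_def by (auto split: if_splits)
  then show "x \<in> {1..5}" using six_le by (auto simp: U6_def)
qed

lemma nrm_id: "Z0 \<subseteq> {1..5} \<Longrightarrow> nrm Z0 = Z0"
  by (auto simp: nrm_def)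

lemma nrm_compl: "Z \<subseteq> U6 \<Longrightarrow> nrm (U6 - Z) = nrm Z"
  by (auto simp: nrm_def U6_def)

lemma nrm_sd: "Z0 \<subseteq> U6 \<Longrightarrow> Z1 \<subseteq> U6 \<Longrightarrow> nrm (sd Z0 Z1) = nrm (sd (nrm Z0) (nrm Z1))"
  unfolding nrm_def sd_def by (auto simp: U6_def)

lemma perm_img_sub: "\<sigma> permutes U6 \<Longrightarrow> S \<subseteq> U6 \<Longrightarrow> \<sigma> ` S \<subseteq> U6"
  by (metis image_mono permutes_image)

lemma perm_img_compl: "\<sigma> permutes U6 \<Longrightarrow> Z \<subseteq> U6 \<Longrightarrow> \<sigma> ` (U6 - Z) = U6 - \<sigma> ` Z"
  by (metis permutes_image permutes_inj image_set_diff)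

lemma act_sub: "\<sigma> permutes U6 \<Longrightarrow> S \<subseteq> U6 \<Longrightarrow> act \<sigma> S \<subseteq> {1..5}"
  unfolding act_def by (intro nrm_sub perm_img_sub)

lemma act_id: "S \<subseteq> {1..5} \<Longrightarrow> act id S = S"
  by (simp add: act_def nrm_id)

lemma img_nrm: "\<sigma> permutes U6 \<Longrightarrow> Z0 \<subseteq> U6 \<Longrightarrow> nrm (\<sigma> ` (nrm Z0)) = nrm (\<sigma> ` Z0)"
  by (cases "6 \<in> Z0") (auto simp: nrm_def[of Z0] perm_img_compl nrm_compl perm_img_sub)

lemma act_comp: "\<sigma> permutes U6 \<Longrightarrow> \<tau> permutes U6 \<Longrightarrow> S \<subseteq> U6 \<Longrightarrow> act \<sigma> (act \<tau> S) = act (\<sigma> \<circ> \<tau>) S"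
  unfolding act_def by (simp add: img_nrm perm_img_sub image_comp)

lemma img_sd: "inj \<sigma> \<Longrightarrow> \<sigma> ` (sd S T) = sd (\<sigma> ` S) (\<sigma> ` T)"
  unfolding sd_def by (simp add: image_Un image_set_diff)

lemma act_sd: "\<sigma> permutes U6 \<Longrightarrow> S \<subseteq> U6 \<Longrightarrow> T \<subseteq> U6 \<Longrightarrow> act \<sigma> (sd S T) = sd (act \<sigma> S) (act \<sigma> T)"
proof -
  assume p: "\<sigma> permutes U6" and S: "S \<subseteq> U6" and T: "T \<subseteq> U6"
  have "act \<sigma> (sd S T) = nrm (sd (\<sigma> ` S) (\<sigma> ` T))"
    using p by (simp add: act_def img_sd permutes_inj)
  also have "\<dots> = nrm (sd (act \<sigma> S) (act \<sigma> T))"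
    using nrm_sd perm_img_sub p S T by (simp add: act_def)
  also have "\<dots> = sd (act \<sigma> S) (act \<sigma> T)"
    apply (rule nrm_id) using act_sub[OF p S] act_sub[OF p T] by (auto simp: sd_def)
  finally show ?thesis .
qed

lemma card_sd: "finite S \<Longrightarrow> finite T \<Longrightarrow> card (sd S T) + 2 * card (S \<inter> T) = card S + card T"
proof -
  assume f: "finite S" "finite T"
  have "card (sd S T) = card (S - T) + card (T - S)"
    unfolding sd_def using f by (intro card_Un_disjoint) auto
  moreover have "card (S - T) + card (S \<inter> T) = card S" using f
    by (metis Diff_Diff_Int Diff_subset card_Diff_subset card_mono inf_le1 le_add_diff_inverse2 Int_commute
        card_Diff_subset_Int finite_Int)
  moreover have "card (T - S) + card (S \<inter> T) = card T" using f
    by (metis card_Diff_subset_Int card_mono finite_Int inf_le2 le_add_diff_inverse2 Int_commute)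
  ultimately show ?thesis by linarith
qed

lemma even_sd: "finite S \<Longrightarrow> finite T \<Longrightarrow> even (card (sd S T)) \<longleftrightarrow> (even (card S) \<longleftrightarrow> even (card T))"
  using card_sd[of S T] by (metis dvd_add_left_iff dvd_triv_left even_add)

lemma card_U6: "card U6 = 6" by (simp add: U6_def)

lemma even_act: "\<sigma> permutes U6 \<Longrightarrow> S \<subseteq> U6 \<Longrightarrow> even (card (act \<sigma> S)) \<longleftrightarrow> even (card S)"
proof -
  assume p: "\<sigma> permutes U6" and S: "S \<subseteq> U6"
  have fin: "finite S" using S finite_subset by (auto simp: U6_def)
  have c: "card (\<sigma> ` S) = card S" using p by (meson card_image inj_on_subset permutes_inj subset_UNIV)
  have sub: "\<sigma> ` S \<subseteq> U6" using perm_img_sub[OF p S] .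
  show ?thesis
  proof (cases "6 \<in> \<sigma> ` S")
    case True
    have "card (U6 - \<sigma> ` S) = 6 - card S" using sub c card_U6
      by (metis card_Diff_subset finite_subset fin finite_imageI)
    moreover have "card S \<le> 6" using S card_U6 by (metis card_mono finite_atLeastAtMost U6_def)
    ultimately show ?thesis using True by (auto simp: act_def nrm_def)
  next
    case False then show ?thesis using c by (simp add: act_def nrm_def)
  qed
qed

definition alt6 :: "(nat \<Rightarrow> nat) set" where "alt6 = {p. p permutes U6 \<and> evenperm p}"

lemma alt6_carrier: "carrier (alt_group 6) = alt6"
  by (auto simp: alt_group_carrier alt6_def U6_def)

lemma alt6_comp: "p \<in> alt6 \<Longrightarrow> q \<in> alt6 \<Longrightarrow> p \<circ> q \<in> alt6"
  unfolding alt6_def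
  by (auto intro: permutes_compose simp: evenperm_comp permutes_imp_permutation[OF finite_atLeastAtMost] U6_def)

lemma alt6_inv: "p \<in> alt6 \<Longrightarrow> inv_into UNIV p \<in> alt6"
  unfolding alt6_def
  by (auto intro: permutes_inv simp: evenperm_inv permutes_imp_permutation[OF finite_atLeastAtMost] U6_def)

lemma alt6_id: "id \<in> alt6"
  unfolding alt6_def by (simp add: permutes_id)

lemma ex_perm12:
  assumes "a \<in> U6" "b \<in> U6" "a \<noteq> b"
  shows "\<exists>\<sigma>\<in>alt6. \<sigma> 1 = a \<and> \<sigma> 2 = b"
proof -
  define \<rho>0 where "\<rho>0 = transpose 2 (transpose 1 a b) \<circ> transpose 1 a"
  have U: "1 \<in> U6" "2 \<in> U6" "3 \<in> U6" "4 \<in> U6" by (auto simp: U6_def)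
  have tb: "transpose 1 a b \<in> U6" using assms U by (auto simp: transpose_def)
  have p0: "\<rho>0 permutes U6" unfolding \<rho>0_def
    using assms U tb by (intro permutes_compose permutes_swap_id) auto
  have v0: "\<rho>0 a = 1" "\<rho>0 b = 2" unfolding \<rho>0_def using assms
    by (auto simp: transpose_def)
  define \<rho> where "\<rho> = (if evenperm \<rho>0 then \<rho>0 else transpose 3 4 \<circ> \<rho>0)"
  have p: "\<rho> permutes U6" unfolding \<rho>_def using p0 U
    by (auto intro: permutes_compose permutes_swap_id)
  have e: "evenperm \<rho>"
  proof (cases "evenperm \<rho>0")
    case False
    have "permutation \<rho>0" using p0 permutes_imp_permutation[OF finite_atLeastAtMost] by (simp add: U6_def)
    then show ?thesis using False by (simp add: \<rho>_def evenperm_comp evenperm_swap permutation_swap_id)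
  qed (simp add: \<rho>_def)
  have v: "\<rho> a = 1" "\<rho> b = 2" unfolding \<rho>_def using v0 by auto
  have "inv_into UNIV \<rho> \<in> alt6" using p e alt6_inv by (auto simp: alt6_def)
  moreover have "inv_into UNIV \<rho> 1 = a" "inv_into UNIV \<rho> 2 = b" using v p by (metis permutes_inverses(2))+
  ultimately show ?thesis by blast
qed

lemma ex_perm2:
  assumes "a \<in> U6" "b \<in> U6" "a \<noteq> b" "c \<in> U6" "d \<in> U6" "c \<noteq> d"
  shows "\<exists>\<sigma>\<in>alt6. \<sigma> a = c \<and> \<sigma> b = d"
proof -
  obtain s where s: "s \<in> alt6" "s 1 = a" "s 2 = b" using ex_perm12 assms by blast
  obtain t where t: "t \<in> alt6" "t 1 = c" "t 2 = d" using ex_perm12 assms by blast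
  have ps: "s permutes U6" using s by (simp add: alt6_def)
  have "inv_into UNIV s a = 1" "inv_into UNIV s b = 2" using s ps by (metis permutes_inverses(2))+
  then have "(t \<circ> inv_into UNIV s) a = c" "(t \<circ> inv_into UNIV s) b = d" using t by auto
  moreover have "t \<circ> inv_into UNIV s \<in> alt6" using alt6_comp alt6_inv s t by blast
  ultimately show ?thesis by blast
qed

lemma sd_assoc: "sd (sd A B) C = sd A (sd B C)" unfolding sd_def by blast
lemma sd_empty[simp]: "sd A {} = A" "sd {} A = A" "sd A A = {}" unfolding sd_def by blast+
lemma sd_sub: "A \<subseteq> B0 \<Longrightarrow> C \<subseteq> B0 \<Longrightarrow> sd A C \<subseteq> B0" unfolding sd_def by blast
lemma sd_comm: "sd A B = sd B A" unfolding sd_def by blast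

lemma alt6_perm: "p \<in> alt6 \<Longrightarrow> p permutes U6" by (simp add: alt6_def)

lemma act_empty[simp]: "act p {} = {}" by (simp add: act_def nrm_def)

definition Xc :: "(nat set \<times> (nat \<Rightarrow> nat)) set" where
  "Xc = {(S, p). S \<subseteq> {1..5} \<and> p \<in> alt6}"

definition Xg :: "(nat set \<times> (nat \<Rightarrow> nat)) monoid" where
  "Xg = \<lparr>carrier = Xc, monoid.mult = (\<lambda>x y. (sd (fst x) (act (snd x) (fst y)), snd x \<circ> snd y)), one = ({}, id)\<rparr>"

lemma Xg_simps[simp]: "carrier Xg = Xc" "(x \<otimes>\<^bsub>Xg\<^esub> y) = (sd (fst x) (act (snd x) (fst y)), snd x \<circ> snd y)"
  "\<one>\<^bsub>Xg\<^esub> = ({}, id)"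
  by (simp_all add: Xg_def)

lemma Xc_iff: "(S, p) \<in> Xc \<longleftrightarrow> S \<subseteq> {1..5} \<and> p \<in> alt6" by (simp add: Xc_def)

lemma act_sub5: "p \<in> alt6 \<Longrightarrow> T \<subseteq> {1..5} \<Longrightarrow> act p T \<subseteq> {1..5}"
  using act_sub alt6_perm U6_5 by blast

lemma group_Xg: "group Xg"
proof (rule groupI)
  fix x y assume "x \<in> carrier Xg" "y \<in> carrier Xg"
  then show "x \<otimes>\<^bsub>Xg\<^esub> y \<in> carrier Xg"
  proof (cases x, cases y)
    fix S p T q assume "x = (S, p)" "y = (T, q)"
    with \<open>x \<in> carrier Xg\<close> \<open>y \<in> carrier Xg\<close> show ?thesis
      using sd_sub[OF _ act_sub5] alt6_comp by (simp add: Xc_iff)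
  qed
next
  show "\<one>\<^bsub>Xg\<^esub> \<in> carrier Xg" by (simp add: Xc_iff alt6_id)
next
  fix x y z assume "x \<in> carrier Xg" "y \<in> carrier Xg" "z \<in> carrier Xg"
  then obtain S p T q R r where xyz: "x = (S, p)" "y = (T, q)" "z = (R, r)"
    "S \<subseteq> {1..5}" "T \<subseteq> {1..5}" "R \<subseteq> {1..5}" "p \<in> alt6" "q \<in> alt6" "r \<in> alt6"
    by (cases x, cases y, cases z) (auto simp: Xc_iff)
  have "act p (sd T (act q R)) = sd (act p T) (act (p \<circ> q) R)"
    using xyz act_sd act_comp alt6_perm act_sub5 U6_5 by (metis subset_trans)
  then show "x \<otimes>\<^bsub>Xg\<^esub> y \<otimes>\<^bsub>Xg\<^esub> z = x \<otimes>\<^bsub>Xg\<^esub> (y \<otimes>\<^bsub>Xg\<^esub> z)"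
    using xyz by (simp add: sd_assoc comp_assoc)
next
  fix x assume "x \<in> carrier Xg"
  then show "\<one>\<^bsub>Xg\<^esub> \<otimes>\<^bsub>Xg\<^esub> x = x" by (cases x) (auto simp: Xc_iff act_id)
next
  fix x assume "x \<in> carrier Xg"
  then obtain S p where x: "x = (S, p)" "S \<subseteq> {1..5}" "p \<in> alt6" by (cases x) (auto simp: Xc_iff)
  let ?y = "(act (inv_into UNIV p) S, inv_into UNIV p)"
  have ip: "inv_into UNIV p \<in> alt6" using alt6_inv x by blast
  have "?y \<in> carrier Xg" using ip x act_sub5 by (simp add: Xc_iff)
  moreover have "?y \<otimes>\<^bsub>Xg\<^esub> x = \<one>\<^bsub>Xg\<^esub>"
    using x alt6_perm[OF x(3)] by (simp add: permutes_inv_o)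
  ultimately show "\<exists>y\<in>carrier Xg. y \<otimes>\<^bsub>Xg\<^esub> x = \<one>\<^bsub>Xg\<^esub>" by blast
qed

lemma finite_Xc: "finite Xc"
proof -
  have "finite alt6" unfolding alt6_def U6_def
    using finite_permutations[of "{1..6::nat}"] by (auto intro: finite_subset)
  then have "finite (Pow {1..5::nat} \<times> alt6)" by simp
  moreover have "Xc \<subseteq> Pow {1..5::nat} \<times> alt6" by (auto simp: Xc_def)
  ultimately show ?thesis by (rule finite_subset[rotated])
qed

locale cex = group G for G (structure) +
  fixes W W' A H :: "'a set" and v0 :: 'a
  assumes W'sub: "subgroup W' G"
  and Wsub: "subgroup W G"
  and WW': "W \<subseteq> W'"
  and comm: "\<And>x y. x \<in> W' \<Longrightarrow> y \<in> W' \<Longrightarrow> x \<otimes> y = y \<otimes> x"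
  and Asub: "subgroup A G"
  and AW': "\<And>x. x \<in> A \<Longrightarrow> x \<in> W' \<Longrightarrow> x = \<one>"
  and gen: "\<And>g. g \<in> carrier G \<Longrightarrow> \<exists>v\<in>W'. \<exists>a\<in>A. g = v \<otimes> a"
  and conjW': "\<And>a v. a \<in> A \<Longrightarrow> v \<in> W' \<Longrightarrow> \<exists>v'\<in>W'. a \<otimes> v = v' \<otimes> a"
  and triv: "\<And>a v. a \<in> A \<Longrightarrow> v \<in> W' \<Longrightarrow> \<exists>w\<in>W. a \<otimes> v = w \<otimes> v \<otimes> a"
  and transW: "\<And>w u. w \<in> W \<Longrightarrow> u \<in> W \<Longrightarrow> w \<noteq> \<one> \<Longrightarrow> u \<noteq> \<one> \<Longrightarrow> \<exists>a\<in>A. a \<otimes> w = u \<otimes> a"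
  and faithful: "\<And>a. a \<in> A \<Longrightarrow> (\<forall>w\<in>W. a \<otimes> w = w \<otimes> a) \<Longrightarrow> a = \<one>"
  and nofix: "\<And>v. v \<in> W' \<Longrightarrow> (\<forall>a\<in>A. a \<otimes> v = v \<otimes> a) \<Longrightarrow> v = \<one>"
  and Wne: "\<exists>w\<in>W. w \<noteq> \<one>"
  and v0: "v0 \<in> W'" "v0 \<notin> W"
  and Hsub: "subgroup H G"
  and Hdef: "\<And>h. h \<in> H \<longleftrightarrow> (\<exists>w\<in>W. \<exists>a\<in>A. h = w \<otimes> a)"
begin

lemma canc[simp]: "x \<in> carrier G \<Longrightarrow> y \<in> carrier G \<Longrightarrow> inv x \<otimes> (x \<otimes> y) = y"
  "x \<in> carrier G \<Longrightarrow> y \<in> carrier G \<Longrightarrow> x \<otimes> (inv x \<otimes> y) = y"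
  by (simp_all add: m_assoc[symmetric])

lemma W'c: "x \<in> W' \<Longrightarrow> x \<in> carrier G" by (rule subgroup.mem_carrier[OF W'sub])
lemma Wc: "x \<in> W \<Longrightarrow> x \<in> carrier G" by (rule subgroup.mem_carrier[OF Wsub])
lemma Ac: "x \<in> A \<Longrightarrow> x \<in> carrier G" by (rule subgroup.mem_carrier[OF Asub])
lemma Hc: "x \<in> H \<Longrightarrow> x \<in> carrier G" by (rule subgroup.mem_carrier[OF Hsub])
lemma WW'x: "x \<in> W \<Longrightarrow> x \<in> W'" using WW' by blast

lemma Aconj: "a \<in> A \<Longrightarrow> w \<in> W \<Longrightarrow> a \<otimes> w \<otimes> inv a \<in> W"
proof -
  assume a: "a \<in> A" and w: "w \<in> W"
  obtain w1 where w1: "w1 \<in> W" "a \<otimes> w = w1 \<otimes> w \<otimes> a" using triv[OF a WW'x[OF w]] by blast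
  have "a \<otimes> w \<otimes> inv a = w1 \<otimes> w \<otimes> a \<otimes> inv a" using w1 by simp
  also have "\<dots> = w1 \<otimes> w" using w1 w a by (simp add: m_assoc Wc Ac)
  finally show ?thesis using w1 w Wsub subgroup.m_closed by metis
qed

lemma Wconj: "g \<in> carrier G \<Longrightarrow> w \<in> W \<Longrightarrow> g \<otimes> w \<otimes> inv g \<in> W"
proof -
  assume g: "g \<in> carrier G" and w: "w \<in> W"
  obtain v a where va: "v \<in> W'" "a \<in> A" "g = v \<otimes> a" using gen[OF g] by blast
  have aw: "a \<otimes> w \<otimes> inv a \<in> W" using Aconj va w by blast
  have "g \<otimes> w \<otimes> inv g = v \<otimes> (a \<otimes> w \<otimes> inv a) \<otimes> inv v"
    using va w by (simp add: m_assoc inv_mult_group W'c Ac Wc)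
  also have "\<dots> = (a \<otimes> w \<otimes> inv a) \<otimes> v \<otimes> inv v"
    using comm[OF va(1) WW'x[OF aw]] by simp
  also have "\<dots> = a \<otimes> w \<otimes> inv a" using va aw by (simp add: m_assoc W'c Wc)
  finally show ?thesis using aw by simp
qed

lemma W'conj: "g \<in> carrier G \<Longrightarrow> x \<in> W' \<Longrightarrow> g \<otimes> x \<otimes> inv g \<in> W'"
proof -
  assume g: "g \<in> carrier G" and x: "x \<in> W'"
  obtain v a where va: "v \<in> W'" "a \<in> A" "g = v \<otimes> a" using gen[OF g] by blast
  obtain x' where x': "x' \<in> W'" "a \<otimes> x = x' \<otimes> a" using conjW'[OF va(2) x] by blast
  have ax: "a \<otimes> x \<otimes> inv a = x'" using x' va x by (simp add: m_assoc Ac W'c)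
  have "g \<otimes> x \<otimes> inv g = v \<otimes> (a \<otimes> x \<otimes> inv a) \<otimes> inv v"
    using va x by (simp add: m_assoc inv_mult_group W'c Ac)
  also have "\<dots> = x' \<otimes> v \<otimes> inv v" using ax comm[OF va(1) x'(1)] by simp
  also have "\<dots> = x'" using va x' by (simp add: m_assoc W'c)
  finally show ?thesis using x' by simp
qed

lemma AWone: "x \<in> A \<Longrightarrow> x \<in> W \<Longrightarrow> x = \<one>" using AW' WW' by blast

lemma Wcomm: "x \<in> W \<Longrightarrow> y \<in> W \<Longrightarrow> x \<otimes> y = y \<otimes> x" using comm WW' by blast

lemma Wm: "x \<in> W \<Longrightarrow> y \<in> W \<Longrightarrow> x \<otimes> y \<in> W" by (rule subgroup.m_closed[OF Wsub])
lemma Wi: "x \<in> W \<Longrightarrow> inv x \<in> W" by (rule subgroup.m_inv_closed[OF Wsub])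
lemma W1: "\<one> \<in> W" by (rule subgroup.one_closed[OF Wsub])
lemma W'm: "x \<in> W' \<Longrightarrow> y \<in> W' \<Longrightarrow> x \<otimes> y \<in> W'" by (rule subgroup.m_closed[OF W'sub])
lemma W'i: "x \<in> W' \<Longrightarrow> inv x \<in> W'" by (rule subgroup.m_inv_closed[OF W'sub])
lemma Am: "x \<in> A \<Longrightarrow> y \<in> A \<Longrightarrow> x \<otimes> y \<in> A" by (rule subgroup.m_closed[OF Asub])
lemma Ai: "x \<in> A \<Longrightarrow> inv x \<in> A" by (rule subgroup.m_inv_closed[OF Asub])
lemma A1: "\<one> \<in> A" by (rule subgroup.one_closed[OF Asub])

lemma maxW:
  assumes M: "maxsub G M" shows "W \<subseteq> M"
proof (rule ccontr)
  assume nW: "\<not> W \<subseteq> M"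
  have Msub: "subgroup M G" and Mne: "M \<noteq> carrier G"
    and Mmax: "\<And>K. subgroup K G \<Longrightarrow> M \<subseteq> K \<Longrightarrow> K = M \<or> K = carrier G"
    using M unfolding maxsub_def by auto
  have Mc: "\<And>x. x \<in> M \<Longrightarrow> x \<in> carrier G" by (rule subgroup.mem_carrier[OF Msub])
  have Mm: "\<And>x y. x \<in> M \<Longrightarrow> y \<in> M \<Longrightarrow> x \<otimes> y \<in> M" by (rule subgroup.m_closed[OF Msub])
  have Mi: "\<And>x. x \<in> M \<Longrightarrow> inv x \<in> M" by (rule subgroup.m_inv_closed[OF Msub])
  have M1: "\<one> \<in> M" by (rule subgroup.one_closed[OF Msub])
  define K where "K = {g. \<exists>w\<in>W. \<exists>m\<in>M. g = w \<otimes> m}"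
  have Ksub: "subgroup K G"
  proof (rule subgroupI)
    show "K \<subseteq> carrier G" unfolding K_def using Wc Mc by auto
    show "K \<noteq> {}" unfolding K_def using W1 M1 by auto
  next
    fix g assume "g \<in> K"
    then obtain w m where wm: "w \<in> W" "m \<in> M" "g = w \<otimes> m" unfolding K_def by blast
    have "inv g = (inv m \<otimes> inv w \<otimes> inv (inv m)) \<otimes> inv m"
      using wm by (simp add: m_assoc inv_mult_group Wc Mc)
    moreover have "inv m \<otimes> inv w \<otimes> inv (inv m) \<in> W"
      by (rule Wconj[OF inv_closed[OF Mc[OF wm(2)]] Wi[OF wm(1)]])
    ultimately show "inv g \<in> K" unfolding K_def using Mi[OF wm(2)] by blast
  next
    fix g h assume "g \<in> K" "h \<in> K"
    then obtain w m w' m' where wm: "w \<in> W" "m \<in> M" "g = w \<otimes> m" "w' \<in> W" "m' \<in> M" "h = w' \<otimes> m'"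
      unfolding K_def by blast
    have "g \<otimes> h = (w \<otimes> (m \<otimes> w' \<otimes> inv m)) \<otimes> (m \<otimes> m')"
      using wm by (simp add: m_assoc Wc Mc)
    moreover have "w \<otimes> (m \<otimes> w' \<otimes> inv m) \<in> W" by (rule Wm[OF wm(1) Wconj[OF Mc[OF wm(2)] wm(4)]])
    ultimately show "g \<otimes> h \<in> K" unfolding K_def using Mm[OF wm(2) wm(5)] by blast
  qed
  have MK: "M \<subseteq> K" unfolding K_def using W1 Mc by force
  obtain w0 where w0: "w0 \<in> W" "w0 \<notin> M" using nW by blast
  have "w0 \<in> K" unfolding K_def using w0 M1 Wc by force
  then have Kall: "K = carrier G" using Mmax[OF Ksub MK] w0 by blast
  have conjM: "g \<otimes> x \<otimes> inv g \<in> M \<inter> W'" if g: "g \<in> carrier G" and x: "x \<in> M \<inter> W'" for g x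
  proof -
    obtain w m where wm: "w \<in> W" "m \<in> M" "g = w \<otimes> m" using g Kall unfolding K_def by blast
    have mx: "m \<otimes> x \<otimes> inv m \<in> W'" using x by (intro W'conj Mc wm) auto
    have mxM: "m \<otimes> x \<otimes> inv m \<in> M" using x by (intro Mm Mi wm) auto
    have "g \<otimes> x \<otimes> inv g = w \<otimes> (m \<otimes> x \<otimes> inv m) \<otimes> inv w"
      using wm x by (simp add: m_assoc inv_mult_group Wc Mc W'c)
    also have "\<dots> = (m \<otimes> x \<otimes> inv m) \<otimes> w \<otimes> inv w" using comm[OF WW'x[OF wm(1)] mx] by simp
    also have "\<dots> = m \<otimes> x \<otimes> inv m" using wm mx by (simp add: m_assoc W'c Wc)
    finally show ?thesis using mx mxM by simp
  qed
  have MW1: "M \<inter> W = {\<one>}"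
  proof (rule ccontr)
    assume "M \<inter> W \<noteq> {\<one>}"
    then obtain x where x: "x \<in> M" "x \<in> W" "x \<noteq> \<one>" using M1 W1 by blast
    have "W \<subseteq> M"
    proof
      fix u assume u: "u \<in> W"
      show "u \<in> M"
      proof (cases "u = \<one>")
        case True then show ?thesis using M1 by simp
      next
        case False
        obtain a where a: "a \<in> A" "a \<otimes> x = u \<otimes> a" using transW[OF x(2) u x(3) False] by blast
        have "u = a \<otimes> x \<otimes> inv a" using a u x by (simp add: m_assoc Ac Wc)
        then show ?thesis using conjM[OF Ac[OF a(1)], of x] x WW'x[OF x(2)] by simp
      qed
    qed
    then show False using nW by blast
  qed
  have "v0 \<in> K" using Kall W'c[OF v0(1)] by simp
  then obtain w m where wm: "w \<in> W" "m \<in> M" "v0 = w \<otimes> m" unfolding K_def by blast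
  have m_eq: "m = inv w \<otimes> v0" using wm by (simp add: m_assoc Wc Mc)
  have mW': "m \<in> W'" unfolding m_eq by (intro W'm W'i WW'x wm v0)
  have mW: "m \<notin> W" using wm(3) v0(2) Wm[OF wm(1)] by auto
  have "a \<otimes> m = m \<otimes> a" if a: "a \<in> A" for a
  proof -
    obtain w1 where w1: "w1 \<in> W" "a \<otimes> m = w1 \<otimes> m \<otimes> a" using triv[OF a mW'] by blast
    have e: "a \<otimes> m \<otimes> inv a = w1 \<otimes> m" using w1 a mW' by (simp add: m_assoc Ac W'c Wc)
    have "w1 \<otimes> m \<in> M" using conjM[OF Ac[OF a], of m] e wm(2) mW' by simp
    then have "w1 \<otimes> m \<otimes> inv m \<in> M" using Mm Mi wm(2) by simp
    then have "w1 \<in> M" using w1 mW' by (simp add: m_assoc Wc W'c)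
    then have "w1 = \<one>" using MW1 w1(1) by auto
    then show ?thesis using w1 mW' by (simp add: W'c)
  qed
  then have "m = \<one>" using nofix[OF mW'] by simp
  then show False using mW W1 by simp
qed


lemma WH: "w \<in> W \<Longrightarrow> w \<in> H" using Hdef[of w] A1 Wc by force
lemma AH: "a \<in> A \<Longrightarrow> a \<in> H" using Hdef[of a] W1 Ac by force
lemma Hdec: "h \<in> H \<Longrightarrow> \<exists>w\<in>W. \<exists>a\<in>A. h = w \<otimes> a" using Hdef by blast

lemma Wfix: "w \<in> W \<Longrightarrow> x \<in> W \<Longrightarrow> w \<otimes> x \<otimes> inv w = x"
  using Wcomm[of w x] by (simp add: m_assoc Wc)

definition cA :: "'a \<Rightarrow> 'a set" where "cA w = (\<lambda>a. w \<otimes> a \<otimes> inv w) ` A"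

lemma cA_H: "w \<in> W \<Longrightarrow> cA w \<subseteq> H"
proof
  fix x assume w: "w \<in> W" and "x \<in> cA w"
  then obtain a where a: "a \<in> A" "x = w \<otimes> a \<otimes> inv w" unfolding cA_def by blast
  have "a \<otimes> inv w \<otimes> inv a \<in> W" by (rule Aconj[OF a(1) Wi[OF w]])
  moreover have "x = (w \<otimes> (a \<otimes> inv w \<otimes> inv a)) \<otimes> a" using a w by (simp add: m_assoc Ac Wc)
  ultimately show "x \<in> H" using Hdef a(1) Wm[OF w] by blast
qed

lemma cA_sub: "w \<in> W \<Longrightarrow> subgroup (cA w) G"
proof (rule subgroupI)
  assume w: "w \<in> W"
  show "cA w \<subseteq> carrier G" using cA_H[OF w] Hc by blast
  show "cA w \<noteq> {}" using A1 unfolding cA_def by blast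
next
  fix x assume w: "w \<in> W" and "x \<in> cA w"
  then obtain a where a: "a \<in> A" "x = w \<otimes> a \<otimes> inv w" unfolding cA_def by blast
  have "inv x = w \<otimes> inv a \<otimes> inv w" using a w by (simp add: m_assoc inv_mult_group Ac Wc)
  then show "inv x \<in> cA w" unfolding cA_def using Ai[OF a(1)] by blast
next
  fix x y assume w: "w \<in> W" and "x \<in> cA w" "y \<in> cA w"
  then obtain a b where a: "a \<in> A" "x = w \<otimes> a \<otimes> inv w" "b \<in> A" "y = w \<otimes> b \<otimes> inv w"
    unfolding cA_def by blast
  have "x \<otimes> y = w \<otimes> (a \<otimes> b) \<otimes> inv w" using a w by (simp add: m_assoc Ac Wc)
  then show "x \<otimes> y \<in> cA w" unfolding cA_def using Am[OF a(1) a(3)] by blast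
qed

lemma cA_one: "cA \<one> = A" unfolding cA_def using Ac by (auto simp: image_iff)

abbreviation "Y \<equiv> G\<lparr>carrier := H\<rparr>"

lemma cA_max: assumes w: "w \<in> W" shows "maxsub Y (cA w)"
  unfolding maxsub_def
proof (intro conjI allI impI)
  show "subgroup (cA w) Y" by (rule subgroup_incl[OF cA_sub[OF w] Hsub cA_H[OF w]])
  obtain u where u: "u \<in> W" "u \<noteq> \<one>" using Wne by blast
  have "u \<notin> cA w"
  proof
    assume "u \<in> cA w"
    then obtain a where a: "a \<in> A" "u = w \<otimes> a \<otimes> inv w" unfolding cA_def by blast
    have "a = inv w \<otimes> u \<otimes> w" using a w by (simp add: m_assoc Ac Wc)
    then have "a \<in> W" using Wm Wi w u by simp
    then have "a = \<one>" using AWone a(1) by blast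
    then show False using a u w by (simp add: Wc)
  qed
  then show "cA w \<noteq> carrier Y" using WH[OF u(1)] by auto
next
  fix K assume Ksub: "subgroup K Y" and CK: "cA w \<subseteq> K"
  have KG: "subgroup K G" by (rule incl_subgroup[OF Hsub Ksub])
  have KH: "K \<subseteq> H" using subgroup.subset[OF Ksub] by simp
  have Km: "\<And>x y. x \<in> K \<Longrightarrow> y \<in> K \<Longrightarrow> x \<otimes> y \<in> K" by (rule subgroup.m_closed[OF KG])
  have Ki: "\<And>x. x \<in> K \<Longrightarrow> inv x \<in> K" by (rule subgroup.m_inv_closed[OF KG])
  have ca: "w \<otimes> a \<otimes> inv w \<in> K" if "a \<in> A" for a using CK that unfolding cA_def by blast
  show "K = cA w \<or> K = carrier Y"
  proof (cases "\<exists>k\<in>K. k \<in> W \<and> k \<noteq> \<one>")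
    case True
    then obtain k where k: "k \<in> K" "k \<in> W" "k \<noteq> \<one>" by blast
    have WK: "W \<subseteq> K"
    proof
      fix u assume u: "u \<in> W"
      show "u \<in> K"
      proof (cases "u = \<one>")
        case True then show ?thesis using subgroup.one_closed[OF KG] by simp
      next
        case False
        obtain a where a: "a \<in> A" "a \<otimes> k = u \<otimes> a" using transW[OF k(2) u k(3) False] by blast
        have ue: "u = a \<otimes> k \<otimes> inv a" using a u k by (simp add: m_assoc Ac Wc)
        let ?c = "w \<otimes> a \<otimes> inv w"
        have cK: "?c \<in> K" using ca[OF a(1)] .
        have "?c \<otimes> k \<otimes> inv ?c = w \<otimes> (a \<otimes> (inv w \<otimes> k \<otimes> inv (inv w)) \<otimes> inv a) \<otimes> inv w"
          using w a k by (simp add: m_assoc inv_mult_group Ac Wc)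
        also have "inv w \<otimes> k \<otimes> inv (inv w) = k" by (rule Wfix[OF Wi[OF w] k(2)])
        also have "w \<otimes> (a \<otimes> k \<otimes> inv a) \<otimes> inv w = a \<otimes> k \<otimes> inv a"
          by (rule Wfix[OF w Aconj[OF a(1) k(2)]])
        finally have "u = ?c \<otimes> k \<otimes> inv ?c" using ue by simp
        then show ?thesis using Km Ki cK k(1) by simp
      qed
    qed
    have "H \<subseteq> K"
    proof
      fix h assume "h \<in> H"
      then obtain u a where ua: "u \<in> W" "a \<in> A" "h = u \<otimes> a" using Hdec by blast
      have "h = u \<otimes> (inv w \<otimes> (w \<otimes> a \<otimes> inv w) \<otimes> w)" using ua w by (simp add: m_assoc Ac Wc)
      moreover have "inv w \<otimes> (w \<otimes> a \<otimes> inv w) \<otimes> w \<in> K"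
        using Km Ki WK w ca[OF ua(2)] by blast
      ultimately show "h \<in> K" using Km WK ua(1) by auto
    qed
    then show ?thesis using KH by auto
  next
    case False
    have "K \<subseteq> cA w"
    proof
      fix k assume k: "k \<in> K"
      then obtain u a where ua: "u \<in> W" "a \<in> A" "k = u \<otimes> a" using Hdec KH by blast
      let ?c = "w \<otimes> a \<otimes> inv w"
      have "k \<otimes> inv ?c = u \<otimes> (a \<otimes> w \<otimes> inv a) \<otimes> inv w"
        using ua w by (simp add: m_assoc inv_mult_group Ac Wc)
      moreover have "u \<otimes> (a \<otimes> w \<otimes> inv a) \<otimes> inv w \<in> W"
        using Wm Wi Aconj[OF ua(2) w] ua(1) w by simp
      moreover have "k \<otimes> inv ?c \<in> K" using Km Ki k ca[OF ua(2)] by simp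
      ultimately have "k \<otimes> inv ?c = \<one>" using False by auto
      then have "k = ?c" using k KH Hc ua w
        by (metis Ac Wc inv_closed m_closed inv_equality inv_inv)
      then show "k \<in> cA w" unfolding cA_def using ua(2) by blast
    qed
    then show ?thesis using CK by auto
  qed
qed

lemma frattini_Y: "frattini Y = {\<one>}"
proof
  show "frattini Y \<subseteq> {\<one>}"
  proof
    fix x assume x: "x \<in> frattini Y"
    have xin: "\<And>w. w \<in> W \<Longrightarrow> x \<in> cA w" using x cA_max unfolding frattini_def by auto
    have xA: "x \<in> A" using xin[OF W1] cA_one by simp
    have "\<forall>w\<in>W. x \<otimes> w = w \<otimes> x"
    proof
      fix w assume w: "w \<in> W"
      obtain b where b: "b \<in> A" "x = w \<otimes> b \<otimes> inv w" using xin[OF w] unfolding cA_def by blast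
      have be: "b = inv w \<otimes> x \<otimes> w" using b w by (simp add: m_assoc Ac Wc)
      have "b \<otimes> inv x = inv w \<otimes> (x \<otimes> w \<otimes> inv x)" using be w xA by (simp add: m_assoc Ac Wc)
      moreover have "inv w \<otimes> (x \<otimes> w \<otimes> inv x) \<in> W" using Wm Wi Aconj[OF xA w] w by simp
      moreover have "b \<otimes> inv x \<in> A" using Am Ai b(1) xA by simp
      ultimately have "b \<otimes> inv x = \<one>" using AWone by simp
      then have "b = x" using b(1) xA
        by (metis Ac inv_closed inv_equality inv_inv)
      then have xe: "x = w \<otimes> x \<otimes> inv w" using b(2) by simp
      have "x \<otimes> w = (w \<otimes> x \<otimes> inv w) \<otimes> w" using xe by (rule arg_cong[where f="\<lambda>z. z \<otimes> w"])
      also have "\<dots> = w \<otimes> x" using w xA by (simp add: m_assoc Ac Wc)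
      finally show "x \<otimes> w = w \<otimes> x" .
    qed
    then show "x \<in> {\<one>}" using faithful[OF xA] by simp
  qed
next
  show "{\<one>} \<subseteq> frattini Y"
    unfolding frattini_def maxsub_def using subgroup.one_closed[OF Hsub]
    by (auto dest: subgroup.one_closed)
qed


abbreviation "Q \<equiv> Y Mod {\<one>}"

lemma grpY: "group Y" by (rule subgroup.subgroup_is_group[OF Hsub is_group])

lemma nY: "{\<one>} \<lhd> Y" using group.one_is_normal[OF grpY] by simp

lemma grpQ: "group Q" by (rule normal.factorgroup_is_group[OF nY])

lemma rc: "x \<in> carrier G \<Longrightarrow> r_coset Y {\<one>} x = {x}" unfolding r_coset_def by simp

lemma carrQ: "carrier Q = (\<lambda>x. {x}) ` H"
  unfolding carrier_FactGroup using rc Hc by simp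

lemma mQ: "{x} \<otimes>\<^bsub>Q\<^esub> {y} = {x \<otimes> y}" by (simp add: set_mult_def)

lemma oneQ: "\<one>\<^bsub>Q\<^esub> = {\<one>}" by simp

lemma invQ: assumes "x \<in> H" shows "inv\<^bsub>Q\<^esub> {x} = {inv x}"
proof -
  have "{inv x} \<otimes>\<^bsub>Q\<^esub> {x} = \<one>\<^bsub>Q\<^esub>" using assms Hc by (simp only: mQ oneQ) simp
  moreover have "{inv x} \<in> carrier Q" "{x} \<in> carrier Q"
    using assms carrQ subgroup.m_inv_closed[OF Hsub assms] by auto
  ultimately show ?thesis using group.inv_equality[OF grpQ] by blast
qed

lemma carrQ_E: "q \<in> carrier Q \<Longrightarrow> \<exists>x\<in>H. q = {x}" using carrQ by auto

definition Wb :: "'a set set" where "Wb = (\<lambda>x. {x}) ` W"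

lemma Wb_normal: "Wb \<lhd> Q"
proof -
  have sub: "subgroup Wb Q"
  proof (rule group.subgroupI[OF grpQ])
    show "Wb \<subseteq> carrier Q" unfolding Wb_def carrQ using WH by auto
    show "Wb \<noteq> {}" unfolding Wb_def using W1 by auto
  next
    fix q assume "q \<in> Wb"
    then obtain w where w: "w \<in> W" "q = {w}" unfolding Wb_def by auto
    show "inv\<^bsub>Q\<^esub> q \<in> Wb" using invQ[OF WH[OF w(1)]] w Wi unfolding Wb_def by auto
  next
    fix q r assume "q \<in> Wb" "r \<in> Wb"
    then obtain w u where w: "w \<in> W" "q = {w}" "u \<in> W" "r = {u}" unfolding Wb_def by auto
    show "q \<otimes>\<^bsub>Q\<^esub> r \<in> Wb" using w Wm unfolding Wb_def by (simp only: mQ) auto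
  qed
  have "\<forall>q\<in>carrier Q. \<forall>n\<in>Wb. q \<otimes>\<^bsub>Q\<^esub> n \<otimes>\<^bsub>Q\<^esub> inv\<^bsub>Q\<^esub> q \<in> Wb"
  proof (intro ballI)
    fix q n assume "q \<in> carrier Q" "n \<in> Wb"
    then obtain h w where hw: "h \<in> H" "q = {h}" "w \<in> W" "n = {w}" using carrQ unfolding Wb_def by auto
    have "q \<otimes>\<^bsub>Q\<^esub> n \<otimes>\<^bsub>Q\<^esub> inv\<^bsub>Q\<^esub> q = {h \<otimes> w \<otimes> inv h}"
      using hw invQ[OF hw(1)] by (simp only: mQ)
    then show "q \<otimes>\<^bsub>Q\<^esub> n \<otimes>\<^bsub>Q\<^esub> inv\<^bsub>Q\<^esub> q \<in> Wb" unfolding Wb_def using Wconj[OF Hc[OF hw(1)] hw(3)] by auto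
  qed
  then show ?thesis using sub group.normal_inv_iff[OF grpQ] by blast
qed

lemma minN: assumes mn: "min_normal Q N" shows "N \<subseteq> Wb"
proof -
  have NQ: "N \<lhd> Q" and Nne: "N \<noteq> {\<one>\<^bsub>Q\<^esub>}"
    and Nmin: "\<And>K. K \<lhd> Q \<Longrightarrow> K \<subseteq> N \<Longrightarrow> K = {\<one>\<^bsub>Q\<^esub>} \<or> K = N"
    using mn unfolding min_normal_def by auto
  have Nsub: "subgroup N Q" using NQ by (simp add: normal_imp_subgroup)
  have Nconj: "\<And>q n. q \<in> carrier Q \<Longrightarrow> n \<in> N \<Longrightarrow> q \<otimes>\<^bsub>Q\<^esub> n \<otimes>\<^bsub>Q\<^esub> inv\<^bsub>Q\<^esub> q \<in> N"
    using NQ group.normal_inv_iff[OF grpQ] by blast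
  have Wconj': "\<And>q n. q \<in> carrier Q \<Longrightarrow> n \<in> Wb \<Longrightarrow> q \<otimes>\<^bsub>Q\<^esub> n \<otimes>\<^bsub>Q\<^esub> inv\<^bsub>Q\<^esub> q \<in> Wb"
    using Wb_normal group.normal_inv_iff[OF grpQ] by blast
  define D where "D = N \<inter> Wb"
  have "D \<lhd> Q"
  proof -
    have "subgroup D Q" unfolding D_def
      by (rule subgroup_Int[OF Nsub normal_imp_subgroup[OF Wb_normal]])
    then show ?thesis using Nconj Wconj' group.normal_inv_iff[OF grpQ] unfolding D_def by blast
  qed
  then have "D = {\<one>\<^bsub>Q\<^esub>} \<or> D = N" using Nmin unfolding D_def by blast
  then show ?thesis
  proof
    assume D1: "D = {\<one>\<^bsub>Q\<^esub>}"
    have "N \<subseteq> {\<one>\<^bsub>Q\<^esub>}"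
    proof
      fix n assume nN: "n \<in> N"
      have "n \<in> carrier Q" using nN subgroup.subset[OF Nsub] by blast
      then obtain x where x: "x \<in> H" "n = {x}" using carrQ by auto
      have xw: "x \<otimes> w = w \<otimes> x" if w: "w \<in> W" for w
      proof -
        have wQ: "{w} \<in> carrier Q" using carrQ WH[OF w] by auto
        have "inv\<^bsub>Q\<^esub> n \<in> N" using nN subgroup.m_inv_closed[OF Nsub] by blast
        then have "{w} \<otimes>\<^bsub>Q\<^esub> inv\<^bsub>Q\<^esub> n \<otimes>\<^bsub>Q\<^esub> inv\<^bsub>Q\<^esub> {w} \<in> N" using Nconj[OF wQ] by blast
        then have "n \<otimes>\<^bsub>Q\<^esub> ({w} \<otimes>\<^bsub>Q\<^esub> inv\<^bsub>Q\<^esub> n \<otimes>\<^bsub>Q\<^esub> inv\<^bsub>Q\<^esub> {w}) \<in> N"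
          using nN subgroup.m_closed[OF Nsub] by blast
        moreover have "n \<otimes>\<^bsub>Q\<^esub> ({w} \<otimes>\<^bsub>Q\<^esub> inv\<^bsub>Q\<^esub> n \<otimes>\<^bsub>Q\<^esub> inv\<^bsub>Q\<^esub> {w}) = {x \<otimes> w \<otimes> inv x \<otimes> inv w}"
          using x invQ[OF x(1)] invQ[OF WH[OF w]] w by (simp only: mQ) (simp add: m_assoc Hc Wc)
        moreover have "x \<otimes> w \<otimes> inv x \<otimes> inv w \<in> W" using Wconj[OF Hc[OF x(1)] w] Wm Wi w by simp
        ultimately have "{x \<otimes> w \<otimes> inv x \<otimes> inv w} \<in> D" unfolding D_def Wb_def by auto
        then have e: "x \<otimes> w \<otimes> inv x \<otimes> inv w = \<one>" using D1 by simp
        have "x \<otimes> w = x \<otimes> w \<otimes> inv x \<otimes> inv w \<otimes> w \<otimes> x" using x w by (simp add: m_assoc Hc Wc)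
        also have "\<dots> = w \<otimes> x" using e x w by (simp add: Hc Wc)
        finally show ?thesis .
      qed
      obtain u a where ua: "u \<in> W" "a \<in> A" "x = u \<otimes> a" using Hdec[OF x(1)] by blast
      have "\<forall>w\<in>W. a \<otimes> w = w \<otimes> a"
      proof
        fix w assume w: "w \<in> W"
        have "u \<otimes> (a \<otimes> w) = u \<otimes> (w \<otimes> a)"
          using xw[OF w] ua Wcomm[OF ua(1) w] w by (simp add: m_assoc[symmetric] Ac Wc)
        then show "a \<otimes> w = w \<otimes> a" using ua w by (simp add: Ac Wc)
      qed
      then have "a = \<one>" using faithful ua(2) by blast
      then have "x \<in> W" using ua by (simp add: Wc)
      then have "n \<in> D" using nN x unfolding D_def Wb_def by auto
      then show "n \<in> {\<one>\<^bsub>Q\<^esub>}" using D1 by simp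
    qed
    moreover have "\<one>\<^bsub>Q\<^esub> \<in> N" using subgroup.one_closed[OF Nsub] .
    ultimately show ?thesis using Nne by blast
  next
    assume "D = N" then show ?thesis unfolding D_def by blast
  qed
qed

lemma socle_sub: "socle Q \<subseteq> Wb"
  unfolding socle_def
  by (rule group.generate_subgroup_incl[OF grpQ]) (use minN normal_imp_subgroup[OF Wb_normal] in auto)

lemma tildeF_sub: "tildeF Y \<subseteq> W"
proof
  fix x assume "x \<in> tildeF Y"
  then have "{x} \<in> Wb" using socle_sub rc Hc unfolding tildeF_def frattini_Y by auto
  then show "x \<in> W" unfolding Wb_def by auto
qed

lemma one_tildeF: "\<one> \<in> tildeF Y"
  unfolding tildeF_def frattini_Y socle_def
  using subgroup.one_closed[OF Hsub] generate.one[of Q] rc[OF one_closed] by simp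


lemma index_ok:
  assumes fin: "finite (carrier G)" and M: "maxsub G M"
  shows "card (tildeF Y) div card (tildeF Y \<inter> M) = 1"
proof -
  have "tildeF Y \<subseteq> M" using tildeF_sub maxW[OF M] by blast
  then have e: "tildeF Y \<inter> M = tildeF Y" by blast
  have "tildeF Y \<subseteq> carrier G" unfolding tildeF_def using Hc by auto
  then have "finite (tildeF Y)" using fin finite_subset by blast
  then have "card (tildeF Y) > 0" using one_tildeF card_gt_0_iff by blast
  then show ?thesis unfolding e by simp
qed

end

lemma cex_transport:
  assumes c: "cex G1 W W' A H v0" and f: "f \<in> iso G1 G2" and g2: "group G2"
  shows "cex G2 (f ` W) (f ` W') (f ` A) (f ` H) (f v0)"
proof -
  interpret c: cex G1 W W' A H v0 by (rule c)
  interpret gh: group_hom G1 G2 f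
    using f g2 c.is_group unfolding group_hom_def group_hom_axioms_def iso_def by blast
  have surj: "f ` carrier G1 = carrier G2" and inj: "inj_on f (carrier G1)"
    using f unfolding iso_def bij_betw_def by auto
  have injE: "\<And>p q. p \<in> carrier G1 \<Longrightarrow> q \<in> carrier G1 \<Longrightarrow> f p = f q \<longleftrightarrow> p = q"
    using inj inj_on_eq_iff by metis
  have hm: "\<And>p q. p \<in> carrier G1 \<Longrightarrow> q \<in> carrier G1 \<Longrightarrow> f p \<otimes>\<^bsub>G2\<^esub> f q = f (p \<otimes>\<^bsub>G1\<^esub> q)"
    by simp
  have h1: "f \<one>\<^bsub>G1\<^esub> = \<one>\<^bsub>G2\<^esub>" by simp
  note cc = c.W'c c.Wc c.Ac c.Hc
  show ?thesis
  proof (intro cex.intro cex_axioms.intro)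
    show "group G2" by (rule g2)
    show "subgroup (f ` W') G2" by (rule gh.subgroup_img_is_subgroup[OF c.W'sub])
    show "subgroup (f ` W) G2" by (rule gh.subgroup_img_is_subgroup[OF c.Wsub])
    show "subgroup (f ` A) G2" by (rule gh.subgroup_img_is_subgroup[OF c.Asub])
    show "subgroup (f ` H) G2" by (rule gh.subgroup_img_is_subgroup[OF c.Hsub])
    show "f ` W \<subseteq> f ` W'" using c.WW' by blast
  next
    fix x y assume "x \<in> f ` W'" "y \<in> f ` W'"
    then obtain p q where pq: "p \<in> W'" "q \<in> W'" "x = f p" "y = f q" by blast
    show "x \<otimes>\<^bsub>G2\<^esub> y = y \<otimes>\<^bsub>G2\<^esub> x" using pq arg_cong[OF c.comm[OF pq(1,2)], of f] by (simp add: cc)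
  next
    fix x assume "x \<in> f ` A" "x \<in> f ` W'"
    then obtain a v where av: "a \<in> A" "v \<in> W'" "x = f a" "x = f v" by blast
    then have "a = v" using injE cc by metis
    then have "v = \<one>\<^bsub>G1\<^esub>" using av c.AW' by simp
    then show "x = \<one>\<^bsub>G2\<^esub>" using av by simp
  next
    fix g assume "g \<in> carrier G2"
    then obtain x where x: "x \<in> carrier G1" "g = f x" using surj by blast
    obtain v a where va: "v \<in> W'" "a \<in> A" "x = v \<otimes>\<^bsub>G1\<^esub> a" using c.gen[OF x(1)] by blast
    show "\<exists>v\<in>f ` W'. \<exists>a\<in>f ` A. g = v \<otimes>\<^bsub>G2\<^esub> a" using va x by (auto simp: cc)
  next
    fix a' v' assume "a' \<in> f ` A" "v' \<in> f ` W'"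
    then obtain a v where av: "a \<in> A" "v \<in> W'" "a' = f a" "v' = f v" by blast
    obtain u where u: "u \<in> W'" "a \<otimes>\<^bsub>G1\<^esub> v = u \<otimes>\<^bsub>G1\<^esub> a" using c.conjW'[OF av(1,2)] by blast
    show "\<exists>v''\<in>f ` W'. a' \<otimes>\<^bsub>G2\<^esub> v' = v'' \<otimes>\<^bsub>G2\<^esub> a'"
      using arg_cong[OF u(2), of f] u(1) av by (intro bexI[of _ "f u"]) (auto simp: cc)
  next
    fix a' v' assume "a' \<in> f ` A" "v' \<in> f ` W'"
    then obtain a v where av: "a \<in> A" "v \<in> W'" "a' = f a" "v' = f v" by blast
    obtain u where u: "u \<in> W" "a \<otimes>\<^bsub>G1\<^esub> v = u \<otimes>\<^bsub>G1\<^esub> v \<otimes>\<^bsub>G1\<^esub> a" using c.triv[OF av(1,2)] by blast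
    show "\<exists>w\<in>f ` W. a' \<otimes>\<^bsub>G2\<^esub> v' = w \<otimes>\<^bsub>G2\<^esub> v' \<otimes>\<^bsub>G2\<^esub> a'"
      using arg_cong[OF u(2), of f] u(1) av by (intro bexI[of _ "f u"]) (auto simp: cc)
  next
    fix w' u' assume "w' \<in> f ` W" "u' \<in> f ` W" "w' \<noteq> \<one>\<^bsub>G2\<^esub>" "u' \<noteq> \<one>\<^bsub>G2\<^esub>"
    then obtain w u where wu: "w \<in> W" "u \<in> W" "w' = f w" "u' = f u" "w \<noteq> \<one>\<^bsub>G1\<^esub>" "u \<noteq> \<one>\<^bsub>G1\<^esub>"
      using h1 by blast
    obtain a where a: "a \<in> A" "a \<otimes>\<^bsub>G1\<^esub> w = u \<otimes>\<^bsub>G1\<^esub> a" using c.transW[OF wu(1,2,5,6)] by blast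
    show "\<exists>a\<in>f ` A. a \<otimes>\<^bsub>G2\<^esub> w' = u' \<otimes>\<^bsub>G2\<^esub> a"
      using arg_cong[OF a(2), of f] a(1) wu by (intro bexI[of _ "f a"]) (auto simp: cc)
  next
    fix a' assume a': "a' \<in> f ` A" and hyp: "\<forall>w\<in>f ` W. a' \<otimes>\<^bsub>G2\<^esub> w = w \<otimes>\<^bsub>G2\<^esub> a'"
    then obtain a where a: "a \<in> A" "a' = f a" by blast
    have "\<forall>w\<in>W. a \<otimes>\<^bsub>G1\<^esub> w = w \<otimes>\<^bsub>G1\<^esub> a"
    proof
      fix w assume w: "w \<in> W"
      have "f (a \<otimes>\<^bsub>G1\<^esub> w) = f (w \<otimes>\<^bsub>G1\<^esub> a)" using hyp a w by (simp add: cc)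
      then show "a \<otimes>\<^bsub>G1\<^esub> w = w \<otimes>\<^bsub>G1\<^esub> a" using injE a w cc by (meson c.m_closed)
    qed
    then have "a = \<one>\<^bsub>G1\<^esub>" using c.faithful a(1) by blast
    then show "a' = \<one>\<^bsub>G2\<^esub>" using a by simp
  next
    fix v' assume v': "v' \<in> f ` W'" and hyp: "\<forall>a\<in>f ` A. a \<otimes>\<^bsub>G2\<^esub> v' = v' \<otimes>\<^bsub>G2\<^esub> a"
    then obtain v where v: "v \<in> W'" "v' = f v" by blast
    have "\<forall>a\<in>A. a \<otimes>\<^bsub>G1\<^esub> v = v \<otimes>\<^bsub>G1\<^esub> a"
    proof
      fix a assume a: "a \<in> A"
      have "f (a \<otimes>\<^bsub>G1\<^esub> v) = f (v \<otimes>\<^bsub>G1\<^esub> a)" using hyp a v by (simp add: cc)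
      then show "a \<otimes>\<^bsub>G1\<^esub> v = v \<otimes>\<^bsub>G1\<^esub> a" using injE a v cc by (meson c.m_closed)
    qed
    then have "v = \<one>\<^bsub>G1\<^esub>" using c.nofix v(1) by blast
    then show "v' = \<one>\<^bsub>G2\<^esub>" using v by simp
  next
    obtain w where w: "w \<in> W" "w \<noteq> \<one>\<^bsub>G1\<^esub>" using c.Wne by blast
    then have "f w \<noteq> \<one>\<^bsub>G2\<^esub>" using injE[of w "\<one>\<^bsub>G1\<^esub>"] h1 cc by auto
    then show "\<exists>w\<in>f ` W. w \<noteq> \<one>\<^bsub>G2\<^esub>" using w by blast
  next
    show "f v0 \<in> f ` W'" using c.v0 by blast
    show "f v0 \<notin> f ` W"
    proof
      assume "f v0 \<in> f ` W"
      then obtain w where "w \<in> W" "f v0 = f w" by blast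
      then show False using injE c.v0 cc by metis
    qed
  next
    fix h
    show "h \<in> f ` H \<longleftrightarrow> (\<exists>w\<in>f ` W. \<exists>a\<in>f ` A. h = w \<otimes>\<^bsub>G2\<^esub> a)"
    proof
      assume "h \<in> f ` H"
      then obtain x where x: "x \<in> H" "h = f x" by blast
      then obtain w a where "w \<in> W" "a \<in> A" "x = w \<otimes>\<^bsub>G1\<^esub> a" using c.Hdef by blast
      then show "\<exists>w\<in>f ` W. \<exists>a\<in>f ` A. h = w \<otimes>\<^bsub>G2\<^esub> a" using x by (auto simp: cc)
    next
      assume "\<exists>w\<in>f ` W. \<exists>a\<in>f ` A. h = w \<otimes>\<^bsub>G2\<^esub> a"
      then obtain w a where "w \<in> W" "a \<in> A" "h = f w \<otimes>\<^bsub>G2\<^esub> f a" by blast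
      moreover then have "w \<otimes>\<^bsub>G1\<^esub> a \<in> H" using c.Hdef by blast
      ultimately show "h \<in> f ` H" using imageI[of "w \<otimes>\<^bsub>G1\<^esub> a" H f] by (simp add: cc)
    qed
  qed
qed

lemma Xc_mem[simp]: "(S, p) \<in> Xc \<longleftrightarrow> S \<subseteq> {1..5} \<and> p \<in> alt6" by (simp add: Xc_def)

lemma inv_Xg: assumes "S \<subseteq> {1..5}" "p \<in> alt6"
  shows "inv\<^bsub>Xg\<^esub> (S, p) = (act (inv_into UNIV p) S, inv_into UNIV p)"
proof -
  have ip: "inv_into UNIV p \<in> alt6" using alt6_inv assms by blast
  have "(act (inv_into UNIV p) S, inv_into UNIV p) \<otimes>\<^bsub>Xg\<^esub> (S, p) = \<one>\<^bsub>Xg\<^esub>"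
    using assms alt6_perm[OF assms(2)] by (simp add: permutes_inv_o)
  moreover have "(act (inv_into UNIV p) S, inv_into UNIV p) \<in> carrier Xg" using ip act_sub5 assms by simp
  moreover have "(S, p) \<in> carrier Xg" using assms by simp
  ultimately show ?thesis using group.inv_equality[OF group_Xg] by blast
qed

definition W'x :: "(nat set \<times> (nat \<Rightarrow> nat)) set" where "W'x = {(S, id) | S. S \<subseteq> {1..5}}"
definition Wx :: "(nat set \<times> (nat \<Rightarrow> nat)) set" where "Wx = {(S, id) | S. S \<subseteq> {1..5} \<and> even (card S)}"
definition Ax :: "(nat set \<times> (nat \<Rightarrow> nat)) set" where "Ax = {({}, p) | p. p \<in> alt6}"
definition Hx :: "(nat set \<times> (nat \<Rightarrow> nat)) set" where
  "Hx = {(S, p) | S p. S \<subseteq> {1..5} \<and> even (card S) \<and> p \<in> alt6}"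

lemma fin5: "S \<subseteq> {1..5::nat} \<Longrightarrow> finite S" using finite_subset by blast

lemma sub6: "S \<subseteq> {1..5::nat} \<Longrightarrow> S \<subseteq> U6" using U6_5 by blast

lemma even_sd5: "S \<subseteq> {1..5::nat} \<Longrightarrow> T \<subseteq> {1..5} \<Longrightarrow> even (card (sd S T)) \<longleftrightarrow> (even (card S) \<longleftrightarrow> even (card T))"
  using even_sd fin5 by blast

lemma even_act5: "p \<in> alt6 \<Longrightarrow> S \<subseteq> {1..5::nat} \<Longrightarrow> even (card (act p S)) \<longleftrightarrow> even (card S)"
  using even_act alt6_perm sub6 by blast

lemma inv_id': "inv_into UNIV (id::nat\<Rightarrow>nat) = id" by (simp add: inv_id)

lemma W'x_sub: "subgroup W'x Xg"
proof (rule group.subgroupI[OF group_Xg])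
  show "W'x \<subseteq> carrier Xg" unfolding W'x_def using alt6_id by auto
  show "W'x \<noteq> {}" unfolding W'x_def by auto
next
  fix a assume "a \<in> W'x"
  then obtain S where S: "a = (S, id)" "S \<subseteq> {1..5}" unfolding W'x_def by auto
  then show "inv\<^bsub>Xg\<^esub> a \<in> W'x" using inv_Xg[OF S(2) alt6_id] unfolding W'x_def
    by (simp add: inv_id' act_id)
next
  fix a b assume "a \<in> W'x" "b \<in> W'x"
  then obtain S T where S: "a = (S, id)" "S \<subseteq> {1..5}" "b = (T, id)" "T \<subseteq> {1..5}" unfolding W'x_def by auto
  then show "a \<otimes>\<^bsub>Xg\<^esub> b \<in> W'x" unfolding W'x_def by (simp add: act_id sd_sub)
qed

lemma Wx_sub: "subgroup Wx Xg"
proof (rule group.subgroupI[OF group_Xg])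
  show "Wx \<subseteq> carrier Xg" unfolding Wx_def using alt6_id by auto
  show "Wx \<noteq> {}" unfolding Wx_def by auto
next
  fix a assume "a \<in> Wx"
  then obtain S where S: "a = (S, id)" "S \<subseteq> {1..5}" "even (card S)" unfolding Wx_def by auto
  then show "inv\<^bsub>Xg\<^esub> a \<in> Wx" using inv_Xg[OF S(2) alt6_id] unfolding Wx_def
    by (simp add: inv_id' act_id)
next
  fix a b assume "a \<in> Wx" "b \<in> Wx"
  then obtain S T where S: "a = (S, id)" "S \<subseteq> {1..5}" "b = (T, id)" "T \<subseteq> {1..5}"
    "even (card S)" "even (card T)" unfolding Wx_def by auto
  then show "a \<otimes>\<^bsub>Xg\<^esub> b \<in> Wx" unfolding Wx_def using even_sd5[OF S(2,4)] by (simp add: act_id sd_sub)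
qed

lemma Ax_sub: "subgroup Ax Xg"
proof (rule group.subgroupI[OF group_Xg])
  show "Ax \<subseteq> carrier Xg" unfolding Ax_def by auto
  show "Ax \<noteq> {}" unfolding Ax_def using alt6_id by auto
next
  fix a assume "a \<in> Ax"
  then obtain p where S: "a = ({}, p)" "p \<in> alt6" unfolding Ax_def by auto
  then show "inv\<^bsub>Xg\<^esub> a \<in> Ax" using inv_Xg[OF _ S(2), of "{}"] alt6_inv unfolding Ax_def by simp
next
  fix a b assume "a \<in> Ax" "b \<in> Ax"
  then obtain p q where S: "a = ({}, p)" "p \<in> alt6" "b = ({}, q)" "q \<in> alt6" unfolding Ax_def by auto
  then show "a \<otimes>\<^bsub>Xg\<^esub> b \<in> Ax" unfolding Ax_def using alt6_comp by simp
qed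

lemma U6_iff: "x \<in> U6 \<longleftrightarrow> x \<in> {1..5} \<or> x = 6" by (auto simp: U6_def)

lemma act_pair12:
  assumes S: "S \<subseteq> {1..5}" "even (card S)" "S \<noteq> {}"
  shows "\<exists>p\<in>alt6. act p {1,2} = S"
proof -
  have fS: "finite S" using fin5 S by blast
  have "card S \<le> 5" using card_mono[OF _ S(1)] by simp
  moreover have "card S \<noteq> 0" using fS S by simp
  ultimately have c: "card S = 2 \<or> card S = 4" using S(2) by presburger
  then show ?thesis
  proof
    assume "card S = 2"
    then obtain a b where ab: "S = {a, b}" "a \<noteq> b" by (meson card_2_iff)
    have abU: "a \<in> U6" "b \<in> U6" "a \<noteq> 6" "b \<noteq> 6" using ab S(1) by (auto simp: U6_def)
    obtain p where p: "p \<in> alt6" "p 1 = a" "p 2 = b" using ex_perm12[OF abU(1,2) ab(2)] by blast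
    have "act p {1,2} = {a, b}" using p abU by (simp add: act_def nrm_def)
    then show ?thesis using p ab by blast
  next
    assume c4: "card S = 4"
    have "card ({1..5} - S) = 1" using card_Diff_subset[OF fS S(1)] c4 by simp
    then obtain c where cS: "{1..5} - S = {c}" by (meson card_1_singletonE)
    then have "c \<in> {1..5}" by blast
    then have cU: "c \<in> U6" "c \<noteq> 6" by (auto simp: U6_def)
    have "6 \<in> U6" "c \<noteq> 6" using cU by (auto simp: U6_def)
    then obtain p where p: "p \<in> alt6" "p 1 = c" "p 2 = 6" using ex_perm12[OF cU(1)] by blast
    have "act p {1,2} = U6 - {c, 6}" using p by (simp add: act_def nrm_def)
    also have "\<dots> = S" using cS S(1) by (auto simp: U6_iff)
    finally show ?thesis using p by blast
  qed
qed

lemma act_inv_cancel: assumes p: "p \<in> alt6" and S: "S \<subseteq> {1..5}"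
  shows "act (inv_into UNIV p) (act p S) = S"
proof -
  have pp: "p permutes U6" using alt6_perm[OF p] .
  have "act (inv_into UNIV p) (act p S) = act (inv_into UNIV p \<circ> p) S"
    by (rule act_comp[OF permutes_inv[OF pp] pp sub6[OF S]])
  also have "inv_into UNIV p \<circ> p = id" using permutes_inv_o(2)[OF pp] .
  finally show ?thesis using act_id[OF S] by (simp add: id_def)
qed

lemma transW_conc:
  assumes S: "S \<subseteq> {1..5}" "even (card S)" "S \<noteq> {}" and T: "T \<subseteq> {1..5}" "even (card T)" "T \<noteq> {}"
  shows "\<exists>p\<in>alt6. act p S = T"
proof -
  obtain p where p: "p \<in> alt6" "act p {1,2} = S" using act_pair12[OF S] by blast
  obtain q where q: "q \<in> alt6" "act q {1,2} = T" using act_pair12[OF T] by blast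
  have "act (inv_into UNIV p) S = {1,2}" using act_inv_cancel[OF p(1), of "{1,2}"] p(2) by simp
  then have "act (q \<circ> inv_into UNIV p) S = T"
    using act_comp[OF alt6_perm[OF q(1)] permutes_inv[OF alt6_perm[OF p(1)]] sub6[OF S(1)]] q by simp
  moreover have "q \<circ> inv_into UNIV p \<in> alt6" using alt6_comp alt6_inv p q by blast
  ultimately show ?thesis by blast
qed

lemma pair_fixed:
  assumes p: "p \<in> alt6" and ij: "i \<in> {1..5}" "j \<in> {1..5}" "i \<noteq> j" and e: "act p {i, j} = {i, j}"
  shows "p ` {i, j} = {i, j}"
proof (cases "6 \<in> p ` {i, j}")
  case True
  have inj: "inj p" using alt6_perm[OF p] permutes_inj by blast
  have c2: "card (p ` {i, j}) = 2" using inj ij by (simp add: inj_eq)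
  have sub: "p ` {i, j} \<subseteq> U6" using perm_img_sub[OF alt6_perm[OF p]] ij U6_5 by blast
  have "card (U6 - p ` {i, j}) = 4" using card_Diff_subset[OF _ sub] c2 card_U6 by simp
  moreover have "act p {i, j} = U6 - p ` {i, j}" using True by (simp add: act_def nrm_def)
  ultimately have "card {i, j} = 4" using e by simp
  then show ?thesis using ij by simp
next
  case False then show ?thesis using e by (simp add: act_def nrm_def)
qed

lemma fix_point:
  assumes p: "p \<in> alt6" and i: "i \<in> {1..5}" and hyp: "\<And>S. S \<subseteq> {1..5} \<Longrightarrow> even (card S) \<Longrightarrow> act p S = S"
  shows "p i = i"
proof -
  obtain j k where jk: "j \<in> {1..5}" "k \<in> {1..5}" "i \<noteq> j" "i \<noteq> k" "j \<noteq> k"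
  proof (cases "i = 1")
    case True then show ?thesis using that[of 2 3] by simp
  next
    case F1: False
    show ?thesis
    proof (cases "i = 2")
      case True then show ?thesis using that[of 1 3] by simp
    next
      case False then show ?thesis using that[of 1 2] F1 by simp
    qed
  qed
  have "p ` {i, j} = {i, j}" using pair_fixed[OF p i jk(1) jk(3)] hyp[of "{i,j}"] i jk by simp
  moreover have "p ` {i, k} = {i, k}" using pair_fixed[OF p i jk(2) jk(4)] hyp[of "{i,k}"] i jk by simp
  ultimately have "p i \<in> {i, j}" "p i \<in> {i, k}" by blast+
  then show ?thesis using jk by auto
qed

lemma faithful_conc:
  assumes p: "p \<in> alt6" and hyp: "\<And>S. S \<subseteq> {1..5} \<Longrightarrow> even (card S) \<Longrightarrow> act p S = S"
  shows "p = id"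
proof
  fix x
  have pp: "p permutes U6" using alt6_perm[OF p] .
  have f5: "\<And>i. i \<in> {1..5} \<Longrightarrow> p i = i" using fix_point[OF p _ hyp] by blast
  show "p x = id x"
  proof (cases "x \<in> {1..5}")
    case True then show ?thesis using f5 by simp
  next
    case False
    show ?thesis
    proof (cases "x = 6")
      case True
      have "6 \<in> U6" by (simp add: U6_def)
      then have "p 6 \<in> U6" using permutes_in_image[OF pp] by blast
      moreover have "p 6 \<notin> {1..5}"
      proof
        assume a: "p 6 \<in> {1..5}"
        then have "p (p 6) = p 6" using f5 by blast
        then have "p 6 = 6" using permutes_inj[OF pp] by (meson injD)
        then show False using a by simp
      qed
      ultimately show ?thesis using True by (auto simp: U6_iff)
    next
      case False
      then have "x \<notin> U6" using \<open>x \<notin> {1..5}\<close> by (auto simp: U6_iff)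
      then show ?thesis using pp by (simp add: permutes_not_in)
    qed
  qed
qed

lemma nofix_conc:
  assumes S: "S \<subseteq> {1..5}" and hyp: "\<And>p. p \<in> alt6 \<Longrightarrow> act p S = S"
  shows "S = {}"
proof (rule ccontr)
  assume ne: "S \<noteq> {}"
  have U: "1 \<in> U6" "6 \<in> U6" by (auto simp: U6_def)
  show False
  proof (cases "S = {1..5}")
    case True
    obtain p where p: "p \<in> alt6" "p 1 = 6" "p 6 = 1" using ex_perm2[OF U(1,2) _ U(2,1)] by auto
    have pp: "p permutes U6" using alt6_perm[OF p(1)] .
    have "{1..5::nat} = U6 - {6}" by (auto simp: U6_iff)
    then have "p ` {1..5} = U6 - {1}"
      using perm_img_compl[OF pp, of "{6}"] U p by (simp add: permutes_image[OF pp])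
    moreover have "6 \<in> p ` {1..5}" using p by force
    ultimately have "act p {1..5} = {1}" unfolding act_def nrm_def using U by auto
    then have e: "{1::nat} = {1..5}" using hyp[OF p(1)] True by simp
    have "(2::nat) \<in> {1..5}" by simp
    then have "(2::nat) \<in> {1}" by (subst e)
    then show False by simp
  next
    case False
    obtain i where i: "i \<in> S" using ne by blast
    obtain j where j: "j \<in> {1..5}" "j \<notin> S" using False S by blast
    have iU: "i \<in> U6" "j \<in> U6" "i \<noteq> 6" "j \<noteq> 6" using i j S U6_5 by auto
    obtain p where p: "p \<in> alt6" "p i = j" "p 6 = 6" using ex_perm2[OF iU(1) U(2) iU(3) iU(2) U(2) iU(4)] by blast
    have inj: "inj p" using alt6_perm[OF p(1)] permutes_inj by blast
    have "6 \<notin> p ` S"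
    proof
      assume "6 \<in> p ` S"
      then obtain y where "y \<in> S" "p y = 6" by (metis imageE)
      then have "y = 6" using p(3) inj by (metis injD)
      then show False using \<open>y \<in> S\<close> S by auto
    qed
    then have "act p S = p ` S" by (simp add: act_def nrm_def)
    then have "j \<in> act p S" using i p by auto
    then show False using hyp[OF p(1)] j by simp
  qed
qed

definition K2 :: "nat monoid" where
  "K2 = \<lparr>carrier = {0, 1}, monoid.mult = (\<lambda>x y. (x + y) mod 2), one = 0\<rparr>"

lemma K2_simps[simp]: "carrier K2 = {0,1}" "x \<otimes>\<^bsub>K2\<^esub> y = (x + y) mod 2" "\<one>\<^bsub>K2\<^esub> = 0"
  by (simp_all add: K2_def)

lemma group_K2: "group K2"
proof (rule groupI)
  fix x y z assume "x \<in> carrier K2" "y \<in> carrier K2" "z \<in> carrier K2"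
  then show "x \<otimes>\<^bsub>K2\<^esub> y \<otimes>\<^bsub>K2\<^esub> z = x \<otimes>\<^bsub>K2\<^esub> (y \<otimes>\<^bsub>K2\<^esub> z)" by auto
next
  fix x assume "x \<in> carrier K2"
  then show "\<exists>y\<in>carrier K2. y \<otimes>\<^bsub>K2\<^esub> x = \<one>\<^bsub>K2\<^esub>" by (intro bexI[of _ x]) auto
qed auto

lemma mod2_lem: "(even (c::nat) \<longleftrightarrow> (even a \<longleftrightarrow> even b)) \<Longrightarrow> c mod 2 = (a mod 2 + b mod 2) mod 2"
  by presburger

definition phi :: "nat set \<times> (nat \<Rightarrow> nat) \<Rightarrow> nat" where "phi x = card (fst x) mod 2"

lemma phi_hom: "phi \<in> hom Xg K2"
proof (rule homI)
  fix x assume "x \<in> carrier Xg" then show "phi x \<in> carrier K2" by (auto simp: phi_def)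
next
  fix x y assume "x \<in> carrier Xg" "y \<in> carrier Xg"
  then obtain S p T q where xy: "x = (S, p)" "y = (T, q)" "S \<subseteq> {1..5}" "p \<in> alt6" "T \<subseteq> {1..5}" "q \<in> alt6"
    by (cases x, cases y) auto
  have e: "even (card (sd S (act p T))) \<longleftrightarrow> (even (card S) \<longleftrightarrow> even (card T))"
    using even_sd5[OF xy(3) act_sub5[OF xy(4,5)]] even_act5[OF xy(4,5)] by simp
  show "phi (x \<otimes>\<^bsub>Xg\<^esub> y) = phi x \<otimes>\<^bsub>K2\<^esub> phi y"
    using mod2_lem[OF e] xy by (simp add: phi_def)
qed

lemma phi_surj: "phi ` carrier Xg = carrier K2"
proof
  show "phi ` carrier Xg \<subseteq> carrier K2" by (auto simp: phi_def)
  have "({}, id) \<in> carrier Xg" "({1}, id) \<in> carrier Xg" using alt6_id by auto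
  moreover have "phi ({}, id) = 0" "phi ({1}, id) = 1" by (auto simp: phi_def)
  ultimately have "0 \<in> phi ` carrier Xg" "1 \<in> phi ` carrier Xg" by (metis image_eqI)+
  then show "carrier K2 \<subseteq> phi ` carrier Xg" by auto
qed

lemma kernel_phi: "kernel Xg K2 phi = Hx"
proof
  show "kernel Xg K2 phi \<subseteq> Hx"
  proof
    fix x assume "x \<in> kernel Xg K2 phi"
    then obtain S p where "x = (S, p)" "S \<subseteq> {1..5}" "p \<in> alt6" "card S mod 2 = 0"
      unfolding kernel_def phi_def by (cases x) auto
    then show "x \<in> Hx" unfolding Hx_def by auto
  qed
  show "Hx \<subseteq> kernel Xg K2 phi"
  proof
    fix x assume "x \<in> Hx"
    then obtain S p where "x = (S, p)" "S \<subseteq> {1..5}" "p \<in> alt6" "even (card S)"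
      unfolding Hx_def by auto
    then show "x \<in> kernel Xg K2 phi" unfolding kernel_def phi_def by auto
  qed
qed

lemma gh_phi: "group_hom Xg K2 phi"
  using group_Xg group_K2 phi_hom unfolding group_hom_def group_hom_axioms_def by blast

lemma Hx_normal: "Hx \<lhd> Xg" using group_hom.normal_kernel[OF gh_phi] kernel_phi by simp

definition v0x :: "nat set \<times> (nat \<Rightarrow> nat)" where "v0x = ({1}, id)"

lemma cex_X: "cex Xg Wx W'x Ax Hx v0x"
proof (intro cex.intro cex_axioms.intro)
  show "group Xg" by (rule group_Xg)
  show "subgroup W'x Xg" by (rule W'x_sub)
  show "subgroup Wx Xg" by (rule Wx_sub)
  show "subgroup Ax Xg" by (rule Ax_sub)
  show "subgroup Hx Xg" using Hx_normal normal_imp_subgroup by blast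
  show "Wx \<subseteq> W'x" unfolding Wx_def W'x_def by auto
next
  fix x y assume "x \<in> W'x" "y \<in> W'x"
  then show "x \<otimes>\<^bsub>Xg\<^esub> y = y \<otimes>\<^bsub>Xg\<^esub> x" unfolding W'x_def by (auto simp: act_id sd_comm)
next
  fix x assume "x \<in> Ax" "x \<in> W'x" then show "x = \<one>\<^bsub>Xg\<^esub>" unfolding Ax_def W'x_def by auto
next
  fix g assume "g \<in> carrier Xg"
  then obtain S p where g: "g = (S, p)" "S \<subseteq> {1..5}" "p \<in> alt6" by (cases g) auto
  then show "\<exists>v\<in>W'x. \<exists>a\<in>Ax. g = v \<otimes>\<^bsub>Xg\<^esub> a" unfolding W'x_def Ax_def
    by (intro bexI[of _ "(S, id)"] bexI[of _ "({}, p)"]) auto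
next
  fix a v assume "a \<in> Ax" "v \<in> W'x"
  then obtain S p where av: "a = ({}, p)" "p \<in> alt6" "v = (S, id)" "S \<subseteq> {1..5}" unfolding Ax_def W'x_def by auto
  then show "\<exists>v'\<in>W'x. a \<otimes>\<^bsub>Xg\<^esub> v = v' \<otimes>\<^bsub>Xg\<^esub> a" unfolding W'x_def
    using act_sub5[OF av(2,4)] by (intro bexI[of _ "(act p S, id)"]) auto
next
  fix a v assume "a \<in> Ax" "v \<in> W'x"
  then obtain S p where av: "a = ({}, p)" "p \<in> alt6" "v = (S, id)" "S \<subseteq> {1..5}" unfolding Ax_def W'x_def by auto
  have sub: "act p S \<subseteq> {1..5}" by (rule act_sub5[OF av(2,4)])
  have ev: "even (card (sd (act p S) S))" using even_sd5[OF sub av(4)] even_act5[OF av(2,4)] by simp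
  have "a \<otimes>\<^bsub>Xg\<^esub> v = (sd (act p S) S, id) \<otimes>\<^bsub>Xg\<^esub> v \<otimes>\<^bsub>Xg\<^esub> a"
    using av sub by (simp add: act_id sd_assoc sd_sub)
  moreover have "sd (act p S) S \<subseteq> {1..5}" by (rule sd_sub[OF sub av(4)])
  then have "(sd (act p S) S, id) \<in> Wx" unfolding Wx_def using ev by blast
  ultimately show "\<exists>w\<in>Wx. a \<otimes>\<^bsub>Xg\<^esub> v = w \<otimes>\<^bsub>Xg\<^esub> v \<otimes>\<^bsub>Xg\<^esub> a" by blast
next
  fix w u assume "w \<in> Wx" "u \<in> Wx" "w \<noteq> \<one>\<^bsub>Xg\<^esub>" "u \<noteq> \<one>\<^bsub>Xg\<^esub>"
  then obtain S T where wu: "w = (S, id)" "S \<subseteq> {1..5}" "even (card S)" "S \<noteq> {}"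
    "u = (T, id)" "T \<subseteq> {1..5}" "even (card T)" "T \<noteq> {}" unfolding Wx_def by auto
  obtain p where p: "p \<in> alt6" "act p S = T" using transW_conc wu by blast
  show "\<exists>a\<in>Ax. a \<otimes>\<^bsub>Xg\<^esub> w = u \<otimes>\<^bsub>Xg\<^esub> a" unfolding Ax_def
    using p wu by (intro bexI[of _ "({}, p)"]) auto
next
  fix a assume a: "a \<in> Ax" and hyp: "\<forall>w\<in>Wx. a \<otimes>\<^bsub>Xg\<^esub> w = w \<otimes>\<^bsub>Xg\<^esub> a"
  then obtain p where p: "a = ({}, p)" "p \<in> alt6" unfolding Ax_def by auto
  have "\<And>S. S \<subseteq> {1..5} \<Longrightarrow> even (card S) \<Longrightarrow> act p S = S"
  proof -
    fix S :: "nat set" assume "S \<subseteq> {1..5}" "even (card S)"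
    then have "(S, id) \<in> Wx" unfolding Wx_def by auto
    then show "act p S = S" using hyp p by auto
  qed
  then have "p = id" using faithful_conc p(2) by blast
  then show "a = \<one>\<^bsub>Xg\<^esub>" using p by simp
next
  fix v assume v: "v \<in> W'x" and hyp: "\<forall>a\<in>Ax. a \<otimes>\<^bsub>Xg\<^esub> v = v \<otimes>\<^bsub>Xg\<^esub> a"
  then obtain S where S: "v = (S, id)" "S \<subseteq> {1..5}" unfolding W'x_def by auto
  have "\<And>p. p \<in> alt6 \<Longrightarrow> act p S = S"
  proof -
    fix p assume "p \<in> alt6"
    then have "({}, p) \<in> Ax" unfolding Ax_def by auto
    then show "act p S = S" using hyp S by auto
  qed
  then have "S = {}" using nofix_conc S(2) by blast
  then show "v = \<one>\<^bsub>Xg\<^esub>" using S by simp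
next
  show "\<exists>w\<in>Wx. w \<noteq> \<one>\<^bsub>Xg\<^esub>" unfolding Wx_def by (intro bexI[of _ "({1,2}, id)"]) auto
  show "v0x \<in> W'x" unfolding v0x_def W'x_def by auto
  show "v0x \<notin> Wx" unfolding v0x_def Wx_def by auto
next
  fix h
  show "h \<in> Hx \<longleftrightarrow> (\<exists>w\<in>Wx. \<exists>a\<in>Ax. h = w \<otimes>\<^bsub>Xg\<^esub> a)"
  proof
    assume "h \<in> Hx"
    then obtain S p where h: "h = (S, p)" "S \<subseteq> {1..5}" "even (card S)" "p \<in> alt6" unfolding Hx_def by auto
    then show "\<exists>w\<in>Wx. \<exists>a\<in>Ax. h = w \<otimes>\<^bsub>Xg\<^esub> a" unfolding Wx_def Ax_def
      by (intro bexI[of _ "(S, id)"] bexI[of _ "({}, p)"]) auto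
  next
    assume "\<exists>w\<in>Wx. \<exists>a\<in>Ax. h = w \<otimes>\<^bsub>Xg\<^esub> a"
    then show "h \<in> Hx" unfolding Wx_def Ax_def Hx_def by auto
  qed
qed

definition fN :: "nat set \<times> (nat \<Rightarrow> nat) \<Rightarrow> nat" where "fN = (SOME f. inj_on f Xc)"

lemma inj_fN: "inj_on fN Xc"
proof -
  have "\<exists>f::nat set \<times> (nat \<Rightarrow> nat) \<Rightarrow> nat. inj_on f Xc"
    using finite_imp_inj_to_nat_seg[OF finite_Xc] by blast
  then show ?thesis unfolding fN_def by (rule someI_ex)
qed

definition gN :: "nat \<Rightarrow> nat set \<times> (nat \<Rightarrow> nat)" where "gN = inv_into Xc fN"

lemma gf[simp]: "x \<in> Xc \<Longrightarrow> gN (fN x) = x" unfolding gN_def using inj_fN by (simp add: inv_into_f_f)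

definition Yn :: "nat monoid" where
  "Yn = \<lparr>carrier = fN ` Xc, monoid.mult = (\<lambda>a b. fN (gN a \<otimes>\<^bsub>Xg\<^esub> gN b)), one = fN \<one>\<^bsub>Xg\<^esub>\<rparr>"

lemma Yn_simps: "carrier Yn = fN ` Xc" "a \<otimes>\<^bsub>Yn\<^esub> b = fN (gN a \<otimes>\<^bsub>Xg\<^esub> gN b)" "\<one>\<^bsub>Yn\<^esub> = fN \<one>\<^bsub>Xg\<^esub>"
  by (simp_all add: Yn_def)

lemma fN_mult: "x \<in> Xc \<Longrightarrow> y \<in> Xc \<Longrightarrow> fN x \<otimes>\<^bsub>Yn\<^esub> fN y = fN (x \<otimes>\<^bsub>Xg\<^esub> y)"
  by (simp add: Yn_simps)

lemma iso_fN: "fN \<in> iso Xg Yn"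
proof (rule isoI)
  show "fN \<in> hom Xg Yn"
    by (rule homI) (auto simp: Yn_simps)
  show "bij_betw fN (carrier Xg) (carrier Yn)" using inj_fN by (simp add: Yn_simps bij_betw_def)
qed

lemma monoid_Yn: "monoid Yn"
proof (rule monoidI)
  interpret X: group Xg by (rule group_Xg)
  fix x y assume "x \<in> carrier Yn" "y \<in> carrier Yn"
  then obtain a b where "a \<in> Xc" "b \<in> Xc" "x = fN a" "y = fN b" by (auto simp: Yn_simps)
  then show "x \<otimes>\<^bsub>Yn\<^esub> y \<in> carrier Yn" using X.m_closed by (auto simp: Yn_simps)
next
  interpret X: group Xg by (rule group_Xg)
  show "\<one>\<^bsub>Yn\<^esub> \<in> carrier Yn" using X.one_closed by (simp add: Yn_simps)
next
  interpret X: group Xg by (rule group_Xg)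
  fix x y z assume "x \<in> carrier Yn" "y \<in> carrier Yn" "z \<in> carrier Yn"
  then obtain a b c where abc: "a \<in> Xc" "b \<in> Xc" "c \<in> Xc" "x = fN a" "y = fN b" "z = fN c"
    by (auto simp: Yn_simps)
  have m: "\<And>u v. u \<in> Xc \<Longrightarrow> v \<in> Xc \<Longrightarrow> u \<otimes>\<^bsub>Xg\<^esub> v \<in> Xc" using X.m_closed by simp
  show "x \<otimes>\<^bsub>Yn\<^esub> y \<otimes>\<^bsub>Yn\<^esub> z = x \<otimes>\<^bsub>Yn\<^esub> (y \<otimes>\<^bsub>Yn\<^esub> z)"
    using abc m X.m_assoc by (simp add: Yn_simps)
next
  interpret X: group Xg by (rule group_Xg)
  fix x assume "x \<in> carrier Yn"
  then obtain a where a: "a \<in> Xc" "x = fN a" by (auto simp: Yn_simps)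
  have o: "\<one>\<^bsub>Xg\<^esub> \<in> Xc" using X.one_closed by simp
  have e1: "\<one>\<^bsub>Xg\<^esub> \<otimes>\<^bsub>Xg\<^esub> a = a" using X.l_one[of a] a by simp
  have e2: "a \<otimes>\<^bsub>Xg\<^esub> \<one>\<^bsub>Xg\<^esub> = a" using X.r_one[of a] a by simp
  show "\<one>\<^bsub>Yn\<^esub> \<otimes>\<^bsub>Yn\<^esub> x = x" by (simp only: Yn_simps gf[OF o] gf[OF a(1)] a(2) e1)
  show "x \<otimes>\<^bsub>Yn\<^esub> \<one>\<^bsub>Yn\<^esub> = x" by (simp only: Yn_simps gf[OF o] gf[OF a(1)] a(2) e2)
qed

lemma group_Yn: "group Yn"
  using group.iso_imp_group[OF group_Xg _ monoid_Yn] iso_fN by (auto simp: is_iso_def)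

lemma finite_Yn: "finite (carrier Yn)" using finite_Xc by (simp add: Yn_simps)

lemma cex_Yn: "cex Yn (fN ` Wx) (fN ` W'x) (fN ` Ax) (fN ` Hx) (fN v0x)"
  by (rule cex_transport[OF cex_X iso_fN group_Yn])

definition psi :: "nat \<Rightarrow> nat" where "psi y = phi (gN y)"

lemma psi_hom: "psi \<in> hom Yn K2"
proof (rule homI)
  fix x assume "x \<in> carrier Yn"
  then obtain a where "a \<in> Xc" "x = fN a" by (auto simp: Yn_simps)
  then show "psi x \<in> carrier K2" using phi_hom unfolding psi_def hom_def by auto
next
  interpret X: group Xg by (rule group_Xg)
  fix x y assume "x \<in> carrier Yn" "y \<in> carrier Yn"
  then obtain a b where ab: "a \<in> Xc" "b \<in> Xc" "x = fN a" "y = fN b" by (auto simp: Yn_simps)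
  have "a \<otimes>\<^bsub>Xg\<^esub> b \<in> Xc" using X.m_closed ab by simp
  then show "psi (x \<otimes>\<^bsub>Yn\<^esub> y) = psi x \<otimes>\<^bsub>K2\<^esub> psi y"
    using ab hom_mult[OF phi_hom, of a b] by (simp add: psi_def Yn_simps)
qed

lemma gh_psi: "group_hom Yn K2 psi"
  using group_Yn group_K2 psi_hom unfolding group_hom_def group_hom_axioms_def by blast

lemma kernel_psi: "kernel Yn K2 psi = fN ` Hx"
proof -
  have "kernel Yn K2 psi = fN ` kernel Xg K2 phi"
    unfolding kernel_def psi_def by (auto simp: Yn_simps)
  then show ?thesis using kernel_phi by simp
qed

lemma psi_surj: "psi ` carrier Yn = carrier K2"
proof -
  have "psi ` carrier Yn = (\<lambda>x. phi (gN (fN x))) ` Xc" unfolding psi_def Yn_simps image_image ..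
  also have "\<dots> = phi ` Xc" by (rule image_cong) simp_all
  finally have "psi ` carrier Yn = phi ` Xc" .
  then show ?thesis using phi_surj by simp
qed

lemma HN_normal: "fN ` Hx \<lhd> Yn" using group_hom.normal_kernel[OF gh_psi] kernel_psi by simp

lemma quot_iso: "Yn Mod (fN ` Hx) \<cong> K2"
  using group_hom.FactGroup_iso[OF gh_psi psi_surj] kernel_psi by simp

definition emb :: "(nat \<Rightarrow> nat) \<Rightarrow> nat" where "emb p = fN ({}, p)"

lemma emb_hom: "emb \<in> hom (alt_group 6) Yn"
proof (rule homI)
  fix p assume "p \<in> carrier (alt_group 6)"
  then show "emb p \<in> carrier Yn" by (simp add: emb_def Yn_simps alt6_carrier)
next
  fix p q assume "p \<in> carrier (alt_group 6)" "q \<in> carrier (alt_group 6)"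
  then have pq: "p \<in> alt6" "q \<in> alt6" by (simp_all add: alt6_carrier)
  then show "emb (p \<otimes>\<^bsub>alt_group 6\<^esub> q) = emb p \<otimes>\<^bsub>Yn\<^esub> emb q"
    by (simp add: emb_def Yn_simps alt_group_mult)
qed

lemma emb_inj: "inj_on emb (carrier (alt_group 6))"
  unfolding emb_def alt6_carrier
  by (rule inj_onI) (use inj_fN in \<open>auto dest: inj_onD\<close>)

lemma not_solvable_iso:
  assumes "Yn \<cong> K" "group K" "solvable K" shows False
proof -
  obtain h where h: "h \<in> iso Yn K" using assms(1) by (auto simp: is_iso_def)
  have hh: "h \<in> hom Yn K" and hinj: "inj_on h (carrier Yn)" using h by (auto simp: iso_def bij_betw_def)
  have "(\<lambda>p. h (emb p)) \<in> hom (alt_group 6) K"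
  proof (rule homI)
    fix p assume "p \<in> carrier (alt_group 6)"
    then show "h (emb p) \<in> carrier K" using hom_in_carrier[OF hh] hom_in_carrier[OF emb_hom] by blast
  next
    fix p q assume "p \<in> carrier (alt_group 6)" "q \<in> carrier (alt_group 6)"
    then show "h (emb (p \<otimes>\<^bsub>alt_group 6\<^esub> q)) = h (emb p) \<otimes>\<^bsub>K\<^esub> h (emb q)"
      using hom_mult[OF emb_hom] hom_mult[OF hh] hom_in_carrier[OF emb_hom] by simp
  qed
  moreover have "inj_on (\<lambda>p. h (emb p)) (carrier (alt_group 6))"
    using emb_inj hinj hom_in_carrier[OF emb_hom] by (auto simp: inj_on_def)
  ultimately have "solvable (alt_group 6)"
    using group_hom.inj_hom_imp_solvable[of "alt_group 6" K "\<lambda>p. h (emb p)"] assms(2,3) alt_group_is_group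
    unfolding group_hom_def group_hom_axioms_def by blast
  then show False using alt_group_is_unsolvable[of 6] by simp
qed

lemma supersoluble_solvable:
  assumes K: "group K" and ss: "supersoluble K" shows "solvable K"
proof -
  interpret K: group K by (rule K)
  obtain n S where S: "S 0 = {\<one>\<^bsub>K\<^esub>}" "S n = carrier K" "\<forall>i\<le>n. S i \<lhd> K"
    "\<forall>i<n. S i \<subseteq> S (Suc i) \<and> cyclic_group ((K\<lparr>carrier := S (Suc i)\<rparr>) Mod (S i))"
    using ss unfolding supersoluble_def by blast
  have "i \<le> n \<Longrightarrow> solvable_seq K (S i)" for i
  proof (induction i)
    case 0 then show ?case using S(1) solvable_seq.unity by simp
  next
    case (Suc i)
    have IH: "solvable_seq K (S i)" using Suc by simp
    have ni: "S i \<lhd> K" and nSi: "S (Suc i) \<lhd> K" using S(3) Suc.prems by auto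
    have sub: "subgroup (S (Suc i)) K" using nSi normal_imp_subgroup by blast
    have inc: "S i \<subseteq> S (Suc i)" and cyc: "cyclic_group ((K\<lparr>carrier := S (Suc i)\<rparr>) Mod (S i))"
      using S(4) Suc.prems by auto
    have nr: "S i \<lhd> K\<lparr>carrier := S (Suc i)\<rparr>" by (rule K.normal_restrict_supergroup[OF sub ni inc])
    have gq: "group ((K\<lparr>carrier := S (Suc i)\<rparr>) Mod (S i))" by (rule normal.factorgroup_is_group[OF nr])
    have "comm_group ((K\<lparr>carrier := S (Suc i)\<rparr>) Mod (S i))" by (rule group.cyclic_imp_abelian_group[OF gq cyc])
    then show ?case using solvable_seq.extension[OF IH nr sub] by blast
  qed
  then show ?thesis using S(2) unfolding solvable_def by (metis order_refl)
qed

lemma K2_upd: "K2\<lparr>carrier := {0, 1}\<rparr> = K2" by (simp add: K2_def)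

lemma cyclic_K2Q: "cyclic_group (K2 Mod {0})"
proof -
  have n0: "{0} \<lhd> K2" using group.one_is_normal[OF group_K2] by simp
  have gQ: "group (K2 Mod {0})" by (rule normal.factorgroup_is_group[OF n0])
  have rc: "r_coset K2 {0} x = {x mod 2}" for x unfolding r_coset_def by simp
  have cQ: "carrier (K2 Mod {0}) = {{0}, {1}}" unfolding carrier_FactGroup rc by auto
  have "generate (K2 Mod {0}) (carrier (K2 Mod {0}) \<inter> {{1}}) = carrier (K2 Mod {0})"
  proof
    show "generate (K2 Mod {0}) (carrier (K2 Mod {0}) \<inter> {{1}}) \<subseteq> carrier (K2 Mod {0})"
      using group.generate_in_carrier[OF gQ] by blast
    have "{0} \<in> generate (K2 Mod {0}) (carrier (K2 Mod {0}) \<inter> {{1}})"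
      using generate.one[of "K2 Mod {0}"] by simp
    moreover have "{1} \<in> generate (K2 Mod {0}) (carrier (K2 Mod {0}) \<inter> {{1}})"
      using cQ by (intro generate.incl) auto
    ultimately show "carrier (K2 Mod {0}) \<subseteq> generate (K2 Mod {0}) (carrier (K2 Mod {0}) \<inter> {{1}})"
      using cQ by auto
  qed
  then have "subgroup_generated (K2 Mod {0}) {{1}} = K2 Mod {0}"
    unfolding subgroup_generated_def by simp
  moreover have "{1} \<in> carrier (K2 Mod {0})" using cQ by simp
  ultimately show ?thesis unfolding cyclic_group_def by blast
qed

lemma U_cls_K2: "U_cls K2"
  unfolding U_cls_def supersoluble_def
proof (intro conjI group_K2)
  show "finite (carrier K2)" by simp
  let ?S = "\<lambda>i::nat. if i = 0 then {0::nat} else {0, 1}"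
  have X: "?S 0 = {\<one>\<^bsub>K2\<^esub>} \<and> ?S 1 = carrier K2 \<and> (\<forall>i\<le>1. ?S i \<lhd> K2) \<and>
     (\<forall>i<1. ?S i \<subseteq> ?S (Suc i) \<and> cyclic_group ((K2\<lparr>carrier := ?S (Suc i)\<rparr>) Mod (?S i)))"
  proof (intro conjI allI impI)
    show "?S 0 = {\<one>\<^bsub>K2\<^esub>}" by simp
    show "?S 1 = carrier K2" by simp
  next
    fix i :: nat assume "i \<le> 1"
    then have "i = 0 \<or> i = 1" by auto
    then show "?S i \<lhd> K2"
      using group.one_is_normal[OF group_K2] group.normal_self[OF group_K2] by auto
  next
    fix i :: nat assume "i < 1"
    then show "?S i \<subseteq> ?S (Suc i)" by simp
  next
    fix i :: nat assume "i < 1"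
    then have "i = 0" by simp
    then show "cyclic_group ((K2\<lparr>carrier := ?S (Suc i)\<rparr>) Mod (?S i))" using cyclic_K2Q by (simp add: K2_def)
  qed
  show "\<exists>n S. S 0 = {\<one>\<^bsub>K2\<^esub>} \<and> S n = carrier K2 \<and> (\<forall>i\<le>n. S i \<lhd> K2) \<and>
     (\<forall>i<n. S i \<subseteq> S (Suc i) \<and> cyclic_group ((K2\<lparr>carrier := S (Suc i)\<rparr>) Mod (S i)))"
    by (rule exI[of _ "1::nat"], rule exI[of _ ?S], rule X)
qed

lemma cex_general:
  assumes FK2: "F K2" and FK: "\<And>K. F K \<Longrightarrow> group K \<and> solvable K"
  shows "counterexample_exists F"
  unfolding counterexample_exists_def
proof (intro exI conjI allI impI)
  show "group Yn" by (rule group_Yn)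
  show "finite (carrier Yn)" by (rule finite_Yn)
  show "fN ` Hx \<lhd> Yn" by (rule HN_normal)
  show "in_cls F (Yn Mod fN ` Hx)" unfolding in_cls_def using FK2 quot_iso by blast
next
  fix M assume "maxsub Yn M"
  then show "let T = tildeF (Yn\<lparr>carrier := fN ` Hx\<rparr>) in card T div card (T \<inter> M) = 1 \<or> Factorial_Ring.prime (card T div card (T \<inter> M))"
    using cex.index_ok[OF cex_Yn finite_Yn] by (simp add: Let_def)
next
  show "\<not> in_cls F Yn"
  proof
    assume "in_cls F Yn"
    then obtain K where "F K" "Yn \<cong> K" unfolding in_cls_def by blast
    then show False using not_solvable_iso FK by blast
  qed
qed

theorem theorem1:
  shows "(\<forall>F. formation F \<and> saturated F \<and> (\<forall>K. F K \<longrightarrow> solvable K) \<and>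
              (\<forall>K. U_cls K \<longrightarrow> F K) \<longrightarrow> counterexample_exists F)
         \<and> counterexample_exists U_cls"
proof (intro conjI allI impI)
  fix F assume hyp: "formation F \<and> saturated F \<and> (\<forall>K. F K \<longrightarrow> solvable K) \<and> (\<forall>K. U_cls K \<longrightarrow> F K)"
  show "counterexample_exists F"
  proof (rule cex_general)
    show "F K2" using hyp U_cls_K2 by blast
    fix K assume "F K"
    then show "group K \<and> solvable K" using hyp unfolding formation_def group_class_def by blast
  qed
next
  show "counterexample_exists U_cls"
  proof (rule cex_general)
    show "U_cls K2" by (rule U_cls_K2)
    fix K assume "U_cls K"
    then show "group K \<and> solvable K" using supersoluble_solvable unfolding U_cls_def by blast
  qed
qed

end
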